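(* Let $\mathbf{F}=F(\mathcal{R}[t,t^{-1}])$ and expand each $g\in\mathbf{F}$ as $g=\sum_{i\ge0}(t-1)^iA_i$ with $A_i\in M_2(\mathcal{R})$. (i) $g\in\mathbf{F}''$ if and only if $A_0=I$, i.e. $g=I+(t-1)A_1+(t-1)^2A_2+\cdots$. (ii) If $k>1$, $d=2^{k-2}$ and $g\in\mathbf{F}^{(k)}$, the $k$-th derived subgroup of $\mathbf{F}$, then $g=I+\sum_{i\ge d}(t-1)^iA_i$ (i.e. $A_0=I$ and $A_i=0$ for $1\le i<d$) and all entries of $A_i$ lie in $\Sigma^d$ for every $i\ge d$.
   Context: $\mathcal{R}=\mathbb{Z}[x,x^{-1},y,y^{-1}]$; $\Sigma$ is the augmentation ideal of $\mathcal{R}$ (kernel of $x,y\mapsto1$ to $\mathbb{Z}$). $F(\mathcal{R}[t,t^{-1}])$ is the subgroup of $GL_2(\mathcal{R}[t,t^{-1}])$ generated by $M_1=\begin{pmatrix}1&1-y\\0&x\end{pmatrix}$ and $M_2T=\begin{pmatrix}yt&0\\1-xt&1\end{pmatrix}$. Via $t=1+s$, $t^{-1}=\sum_{i\ge0}(-s)^i$, $\mathcal{R}[t,t^{-1}]$ embeds in $\mathcal{R}[[s]]$, giving each matrix over $\mathcal{R}[t,t^{-1}]$ a unique expansion $\sum_{i\ge0}(t-1)^iA_i$ with $A_i$ matrices over $\mathcal{R}$. Derived series: $\mathbf{F}^{(1)}=\mathbf{F}'$, $\mathbf{F}^{(k+1)}=[\mathbf{F}^{(k)},\mathbf{F}^{(k)}]$,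 and $\mathbf{F}''=\mathbf{F}^{(2)}$. *)

theory Defs
  imports "HOL-Library.Poly_Mapping" "HOL-Library.Product_Plus"
    "HOL-Computational_Algebra.Formal_Power_Series"
begin

datatype 'a mat2 = M2 'a 'a 'a 'a
  (* M2 a b c d  is the matrix  [[a, b], [c, d]] *)

instantiation mat2 :: (comm_ring_1) monoid_mult
begin
fun times_mat2 :: "'a mat2 \<Rightarrow> 'a mat2 \<Rightarrow> 'a mat2" where
  "times_mat2 (M2 a b c d) (M2 e f g h) =
     M2 (a*e + b*g) (a*f + b*h) (c*e + d*g) (c*f + d*h)"
definition one_mat2 :: "'a mat2" where "one_mat2 = M2 1 0 0 1"
instance
proof
  fix p q r :: "'a mat2"
  show "p * q * r = p * (q * r)"
    by (cases p; cases q; cases r) (simp add: algebra_simps)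
  show "1 * p = p" by (cases p) (simp add: one_mat2_def)
  show "p * 1 = p" by (cases p) (simp add: one_mat2_def)
qed
end

fun mat2_map :: "('a \<Rightarrow> 'b) \<Rightarrow> 'a mat2 \<Rightarrow> 'b mat2" where
  "mat2_map f (M2 a b c d) = M2 (f a) (f b) (f c) (f d)"

fun mat2_entries :: "'a mat2 \<Rightarrow> 'a set" where
  "mat2_entries (M2 a b c d) = {a, b, c, d}"

inductive_set gen_grp :: "'a::monoid_mult set \<Rightarrow> 'a set" for X where
  one: "1 \<in> gen_grp X"
| gen: "x \<in> X \<Longrightarrow> x \<in> gen_grp X"
| inv: "x \<in> X \<Longrightarrow> x * y = 1 \<Longrightarrow> y * x = 1 \<Longrightarrow> y \<in> gen_grp X"
| mult: "a \<in> gen_grp X \<Longrightarrow> b \<in> gen_grp X \<Longrightarrow> a * b \<in> gen_grp X"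

definition commutators :: "'a::monoid_mult set \<Rightarrow> 'a set" where
  "commutators H = {a * b * a' * b' | a b a' b'.
      a \<in> H \<and> b \<in> H \<and> a * a' = 1 \<and> a' * a = 1 \<and> b * b' = 1 \<and> b' * b = 1}"

definition derived :: "'a::monoid_mult set \<Rightarrow> 'a set" where
  "derived H = gen_grp (commutators H)"

text \<open>k-th derived subgroup: derived_series 1 H = H', derived_series 2 H = H''.\<close>
definition derived_series :: "nat \<Rightarrow> 'a::monoid_mult set \<Rightarrow> 'a set" where
  "derived_series k H = (derived ^^ k) H"

type_synonym R = "(int \<times> int) \<Rightarrow>\<^sub>0 int"    (* monomial x^a y^b  \<mapsto>  (a,b) *)
type_synonym Rt = "int \<Rightarrow>\<^sub>0 R"              (* Laurent polynomials in t over R *)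

definition xR :: R where "xR = Poly_Mapping.single (1, 0) 1"
definition yR :: R where "yR = Poly_Mapping.single (0, 1) 1"

definition constRt :: "R \<Rightarrow> Rt" where "constRt r = Poly_Mapping.single 0 r"
definition tRt :: Rt where "tRt = Poly_Mapping.single 1 1"

definition augR :: "R \<Rightarrow> int" where "augR r = (\<Sum>m\<in>Poly_Mapping.keys r. Poly_Mapping.lookup r m)"
definition Sigma_aug :: "R set" where "Sigma_aug = {r. augR r = 0}"

inductive_set ideal_pow_step :: "'a::comm_ring_1 set \<Rightarrow> 'a set \<Rightarrow> 'a set" for I P where
  zero: "0 \<in> ideal_pow_step I P"
| prod: "a \<in> I \<Longrightarrow> b \<in> P \<Longrightarrow> a * b \<in> ideal_pow_step I P"
| add: "u \<in> ideal_pow_step I P \<Longrightarrow> v \<in> ideal_pow_step I P \<Longrightarrow> u + v \<in> ideal_pow_step I P"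

fun ideal_pow :: "'a::comm_ring_1 set \<Rightarrow> nat \<Rightarrow> 'a set" where
  "ideal_pow I 0 = UNIV"
| "ideal_pow I (Suc n) = ideal_pow_step I (ideal_pow I n)"

definition M1 :: "Rt mat2" where
  "M1 = M2 1 (constRt (1 - yR)) 0 (constRt xR)"
definition M2T :: "Rt mat2" where
  "M2T = M2 (constRt yR * tRt) 0 (1 - constRt xR * tRt) 1"

definition FF :: "Rt mat2 set" where "FF = gen_grp {M1, M2T}"

text \<open>Embedding R[t,t^-1] into R[[s]] via t = 1 + s, t^-1 = sum_i (-s)^i.\<close>
definition tinv_fps :: "R fps" where "tinv_fps = Abs_fps (\<lambda>i. (-1) ^ i)"

definition tpow_fps :: "int \<Rightarrow> R fps" where
  "tpow_fps n = (if 0 \<le> n then (1 + fps_X) ^ nat n else tinv_fps ^ nat (- n))"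

definition emb_fps :: "Rt \<Rightarrow> R fps" where
  "emb_fps p = (\<Sum>n\<in>Poly_Mapping.keys p. fps_const (Poly_Mapping.lookup p n) * tpow_fps n)"

definition coeff_mat :: "Rt mat2 \<Rightarrow> nat \<Rightarrow> R mat2" where
  "coeff_mat g i = mat2_map (\<lambda>p. fps_nth (emb_fps p) i) g"

end

theory Submission
  imports Defs "HOL-Library.Product_Lexorder"
begin


lemma inv_unique:
  fixes x y z :: "'a::monoid_mult"
  assumes "x * y = 1" "z * x = 1" shows "y = z"
  by (metis assms mult.assoc mult_1_left mult_1_right)

definition SG :: "'a::monoid_mult set \<Rightarrow> bool" where
  "SG H \<longleftrightarrow> 1 \<in> H \<and> (\<forall>a\<in>H. \<forall>b\<in>H. a * b \<in> H) \<and> (\<forall>a\<in>H. \<exists>b\<in>H. a * b = 1 \<and> b * a = 1)"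

lemma SG_one: "SG H \<Longrightarrow> 1 \<in> H" by (simp add: SG_def)
lemma SG_mult: "SG H \<Longrightarrow> a \<in> H \<Longrightarrow> b \<in> H \<Longrightarrow> a * b \<in> H" by (simp add: SG_def)
lemma SG_inv_ex: "SG H \<Longrightarrow> a \<in> H \<Longrightarrow> \<exists>b\<in>H. a * b = 1 \<and> b * a = 1" by (simp add: SG_def)
lemma SG_inv: "SG H \<Longrightarrow> a \<in> H \<Longrightarrow> a * a' = 1 \<Longrightarrow> a' * a = 1 \<Longrightarrow> a' \<in> H"
  by (metis SG_inv_ex inv_unique)

lemma gen_grp_SG:
  assumes "\<And>x. x \<in> X \<Longrightarrow> \<exists>y. x * y = 1 \<and> y * x = 1"
  shows "SG (gen_grp X)"
proof -
  have "\<exists>h\<in>gen_grp X. g * h = 1 \<and> h * g = 1" if "g \<in> gen_grp X" for g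
    using that
  proof induction
    case one then show ?case by (auto intro: gen_grp.one)
  next
    case (gen x)
    then obtain y where "x * y = 1" "y * x = 1" using assms by blast
    then show ?case using gen by (auto intro: gen_grp.inv)
  next
    case (inv x y) then show ?case by (auto intro: gen_grp.gen)
  next
    case (mult a b)
    then obtain a' b' where "a' \<in> gen_grp X" "b' \<in> gen_grp X" "a * a' = 1" "a' * a = 1" "b * b' = 1" "b' * b = 1" by blast
    then show ?case
      by (intro bexI[of _ "b' * a'"]) (auto intro: gen_grp.mult simp: mult.assoc[symmetric] , simp_all add: mult.assoc)
  qed
  then show ?thesis by (auto simp: SG_def intro: gen_grp.one gen_grp.mult)
qed

lemma commutators_inv:
  assumes "x \<in> commutators H" shows "\<exists>y. x * y = 1 \<and> y * x = 1"
proof -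
  from assms obtain a b a' b' where x: "x = a * b * a' * b'" "a * a' = 1" "a' * a = 1" "b * b' = 1" "b' * b = 1"
    by (auto simp: commutators_def)
  have "x * (b * a * b' * a') = 1" unfolding x(1)
    by (simp add: mult.assoc) (simp add: mult.assoc[symmetric] x)
  moreover have "(b * a * b' * a') * x = 1" unfolding x(1)
    by (simp add: mult.assoc) (simp add: mult.assoc[symmetric] x)
  ultimately show ?thesis by blast
qed

lemma derived_SG: "SG (derived H)"
  unfolding derived_def by (rule gen_grp_SG) (rule commutators_inv)

lemma gen_grp_subset:
  assumes "SG H" "X \<subseteq> H" shows "gen_grp X \<subseteq> H"
proof
  fix g assume "g \<in> gen_grp X" then show "g \<in> H"
    by induction (use assms in \<open>auto intro: SG_one SG_mult SG_inv\<close>)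
qed

lemma commutators_subset: "SG H \<Longrightarrow> commutators H \<subseteq> H"
  unfolding commutators_def by (auto intro!: SG_mult dest: SG_inv)

lemma derived_subset: "SG H \<Longrightarrow> derived H \<subseteq> H"
  unfolding derived_def by (metis gen_grp_subset commutators_subset)

definition NC :: "'a::monoid_mult set \<Rightarrow> 'a set \<Rightarrow> bool" where
  "NC G H \<longleftrightarrow> (\<forall>g\<in>G. \<forall>g' h. g * g' = 1 \<longrightarrow> g' * g = 1 \<longrightarrow> h \<in> H \<longrightarrow> g * h * g' \<in> H)"

lemma NCD: "NC G H \<Longrightarrow> g \<in> G \<Longrightarrow> g * g' = 1 \<Longrightarrow> g' * g = 1 \<Longrightarrow> h \<in> H \<Longrightarrow> g * h * g' \<in> H"
  by (simp add: NC_def)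

lemma NC_self: "SG G \<Longrightarrow> NC G G"
  unfolding NC_def by (auto intro!: SG_mult dest: SG_inv)

lemma conj_mult:
  fixes g g' a b :: "'a::monoid_mult"
  assumes "g' * g = 1" shows "g * (a * b) * g' = (g * a * g') * (g * b * g')"
proof -
  have "(g * a * g') * (g * b * g') = g * a * (g' * g) * (b * g')" by (simp add: mult.assoc)
  also have "\<dots> = g * (a * b) * g'" by (simp add: assms mult.assoc)
  finally show ?thesis by simp
qed

lemma NC_commutators:
  assumes "NC G H" shows "NC G (commutators H)"
  unfolding NC_def
proof (intro ballI allI impI)
  fix g g' h assume g: "g \<in> G" "g * g' = 1" "g' * g = 1" and h: "h \<in> commutators H"
  from h obtain a b a' b' where x: "h = a * b * a' * b'" "a * a' = 1" "a' * a = 1" "b * b' = 1" "b' * b = 1"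
    "a \<in> H" "b \<in> H"
    by (auto simp: commutators_def)
  have e: "g * h * g' = (g*a*g') * (g*b*g') * (g*a'*g') * (g*b'*g')"
    unfolding x(1) by (simp only: conj_mult[OF g(3)])
  have i1: "(g*a*g') * (g*a'*g') = 1" "(g*a'*g') * (g*a*g') = 1"
       "(g*b*g') * (g*b'*g') = 1" "(g*b'*g') * (g*b*g') = 1"
    using g x by (simp_all add: conj_mult[symmetric])
  show "g * h * g' \<in> commutators H" unfolding e commutators_def
    using i1 NCD[OF assms g] x by blast
qed

lemma NC_gen_grp:
  assumes "NC G X" shows "NC G (gen_grp X)"
  unfolding NC_def
proof (intro ballI allI impI)
  fix g g' h assume g: "g \<in> G" "g * g' = 1" "g' * g = 1" and h: "h \<in> gen_grp X"
  from h show "g * h * g' \<in> gen_grp X"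
  proof induction
    case one then show ?case using g by (simp add: gen_grp.one)
  next
    case (gen x) then show ?case using NCD[OF assms g] by (simp add: gen_grp.gen)
  next
    case (inv x y)
    have "(g * x * g') * (g * y * g') = 1" "(g * y * g') * (g * x * g') = 1"
      using inv g by (simp_all add: conj_mult[symmetric])
    then show ?case using NCD[OF assms g] inv by (auto intro: gen_grp.inv)
  next
    case (mult a b) then show ?case using g by (simp add: conj_mult gen_grp.mult)
  qed
qed

lemma NC_derived: "NC G H \<Longrightarrow> NC G (derived H)"
  unfolding derived_def by (intro NC_gen_grp NC_commutators)

lemma derived_series_Suc: "derived_series (Suc k) H = derived (derived_series k H)"
  by (simp add: derived_series_def)

definition zp :: "'a::monoid_mult \<Rightarrow> 'a \<Rightarrow> int \<Rightarrow> 'a" where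
  "zp x x' m = (if 0 \<le> m then x ^ nat m else x' ^ nat (- m))"

context
  fixes x x' :: "'a::monoid_mult"
  assumes xi: "x * x' = 1" "x' * x = 1"
begin

lemma zp_succ: "zp x x' (m + 1) = zp x x' m * x"
proof (cases "0 \<le> m")
  case True
  then have "nat (m + 1) = Suc (nat m)" by simp
  then show ?thesis using True by (simp add: zp_def) (rule power_commutes[symmetric])
next
  case False
  define k where "k = nat (-(m+1))"
  have k: "nat (- m) = Suc k" using False unfolding k_def by arith
  have "x' ^ Suc k * x = x' ^ k" by (simp add: power_Suc2 mult.assoc xi del: power_Suc)
  then show ?thesis using False k by (auto simp: zp_def k_def)
qed

lemma zp_pred: "zp x x' (m - 1) = zp x x' m * x'"
proof (cases "0 < m")
  case True
  define k where "k = nat (m - 1)"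
  have k: "nat m = Suc k" using True unfolding k_def by arith
  have "x ^ Suc k * x' = x ^ k" by (simp add: power_Suc2 mult.assoc xi del: power_Suc)
  then show ?thesis using True k by (auto simp: zp_def k_def)
next
  case False
  have k: "nat (1 - m) = Suc (nat (- m))" using False by arith
  show ?thesis using False by (simp add: zp_def k power_Suc2 del: power_Suc)
qed

lemma zp_0 [simp]: "zp x x' 0 = 1" by (simp add: zp_def)
lemma zp_1 [simp]: "zp x x' 1 = x" by (simp add: zp_def)
lemma zp_m1 [simp]: "zp x x' (-1) = x'" by (simp add: zp_def)

lemma zp_add: "zp x x' (m + n) = zp x x' m * zp x x' n"
proof (induction n rule: int_induct[where k=0])
  case base then show ?case by simp
next
  case (step1 i)
  have "zp x x' (m + (i + 1)) = zp x x' (m + i) * x" using zp_succ[of "m+i"] by (simp add: add.assoc)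
  then show ?case using step1 by (simp add: zp_succ mult.assoc)
next
  case (step2 i)
  have "zp x x' (m + (i - 1)) = zp x x' (m + i) * x'" using zp_pred[of "m+i"] by (simp add: algebra_simps)
  then show ?case using step2 by (simp add: zp_pred mult.assoc)
qed

lemma zp_inv1 [simp]: "zp x x' m * zp x x' (- m) = 1"
  using zp_add[of m "-m"] by simp
lemma zp_inv2 [simp]: "zp x x' (- m) * zp x x' m = 1"
  using zp_add[of "-m" m] by simp
lemma zp_inv1' [simp]: "zp x x' m * (zp x x' (- m) * y) = y"
  by (simp add: mult.assoc[symmetric])
lemma zp_inv2' [simp]: "zp x x' (- m) * (zp x x' m * y) = y"
  by (simp add: mult.assoc[symmetric])

lemma zp_in: "SG H \<Longrightarrow> x \<in> H \<Longrightarrow> x' \<in> H \<Longrightarrow> zp x x' m \<in> H"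
proof -
  assume H: "SG H" "x \<in> H" "x' \<in> H"
  have "x ^ n \<in> H" for n by (induction n) (auto intro: SG_mult SG_one H)
  moreover have "x' ^ n \<in> H" for n by (induction n) (auto intro: SG_mult SG_one H)
  ultimately show ?thesis by (simp add: zp_def)
qed

end

lemma zp_hom:
  assumes "\<And>u v. h (u * v) = h u * h v" "h 1 = 1"
  shows "h (zp x x' m) = zp (h x) (h x') m"
proof -
  have "h (y ^ n) = h y ^ n" for y n by (induction n) (auto simp: assms)
  then show ?thesis by (simp add: zp_def)
qed


instance prod :: (linordered_ab_group_add, linordered_ab_group_add) ordered_cancel_comm_monoid_add
  by standard (auto simp: less_eq_prod_def)

definition lin :: "('b::comm_ring_1 \<Rightarrow> 'c::comm_ring_1) \<Rightarrow> ('a::comm_monoid_add \<Rightarrow> 'c) \<Rightarrow> ('a \<Rightarrow>\<^sub>0 'b) \<Rightarrow> 'c" where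
  "lin \<phi> \<psi> p = (\<Sum>n\<in>Poly_Mapping.keys p. \<phi> (Poly_Mapping.lookup p n) * \<psi> n)"

context
  fixes \<phi> :: "'b::comm_ring_1 \<Rightarrow> 'c::comm_ring_1" and \<psi> :: "'a::comm_monoid_add \<Rightarrow> 'c"
  assumes phi0: "\<phi> 0 = 0" and phiadd: "\<And>u v. \<phi> (u + v) = \<phi> u + \<phi> v"
begin

lemma lin_superset:
  assumes "finite S" "Poly_Mapping.keys p \<subseteq> S"
  shows "lin \<phi> \<psi> p = (\<Sum>n\<in>S. \<phi> (Poly_Mapping.lookup p n) * \<psi> n)"
  unfolding lin_def using assms
  by (intro sum.mono_neutral_left) (auto simp: in_keys_iff phi0)

lemma lin_add: "lin \<phi> \<psi> (p + q) = lin \<phi> \<psi> p + lin \<phi> \<psi> q"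
proof -
  let ?S = "Poly_Mapping.keys p \<union> Poly_Mapping.keys q"
  have "lin \<phi> \<psi> (p + q) = (\<Sum>n\<in>?S. \<phi> (Poly_Mapping.lookup (p + q) n) * \<psi> n)"
    by (rule lin_superset) (auto simp: keys_add)
  also have "\<dots> = (\<Sum>n\<in>?S. \<phi> (Poly_Mapping.lookup p n) * \<psi> n) + (\<Sum>n\<in>?S. \<phi> (Poly_Mapping.lookup q n) * \<psi> n)"
    by (simp add: lookup_add phiadd distrib_right sum.distrib)
  also have "\<dots> = lin \<phi> \<psi> p + lin \<phi> \<psi> q"
    by (subst (1 2) lin_superset[symmetric]) auto
  finally show ?thesis .
qed

lemma lin_zero [simp]: "lin \<phi> \<psi> 0 = 0" by (simp add: lin_def)

lemma lin_single: "lin \<phi> \<psi> (Poly_Mapping.single n r) = \<phi> r * \<psi> n"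
  by (cases "r = 0") (simp_all add: lin_def phi0)

lemma update_eq_add:
  "a \<notin> Poly_Mapping.keys f \<Longrightarrow> Poly_Mapping.update a b f = f + Poly_Mapping.single a b"
  by (rule poly_mapping_eqI) (auto simp: lookup_update lookup_add lookup_single in_keys_iff when_def)

lemma lin_mult:
  assumes phimult: "\<And>u v. \<phi> (u * v) = \<phi> u * \<phi> v"
    and psiadd: "\<And>m n. \<psi> (m + n) = \<psi> m * \<psi> n"
  shows "lin \<phi> \<psi> (p * q) = lin \<phi> \<psi> p * lin \<phi> \<psi> q"
proof -
  have single_case: "lin \<phi> \<psi> (Poly_Mapping.single a b * q) = lin \<phi> \<psi> (Poly_Mapping.single a b) * lin \<phi> \<psi> q" for a b
  proof (induction q rule: update_induct)
    case const then show ?case by simp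
  next
    case (update f c d)
    then show ?case
      by (simp add: update_eq_add distrib_left lin_add mult_single lin_single phimult psiadd algebra_simps)
  qed
  show ?thesis
  proof (induction p rule: update_induct)
    case const then show ?case by simp
  next
    case (update f a b)
    then show ?case by (simp add: update_eq_add distrib_right lin_add single_case)
  qed
qed

end

section \<open>Embedding into power series\<close>

lemma tinv_mult: "(1 + fps_X) * tinv_fps = (1 :: R fps)"
proof (rule fps_ext)
  fix n
  show "fps_nth ((1 + fps_X) * tinv_fps) n = fps_nth (1 :: R fps) n"
    by (cases n) (simp_all add: distrib_right fps_X_mult_nth tinv_fps_def)
qed

lemma tinv_mult': "tinv_fps * (1 + fps_X) = (1 :: R fps)"
  using tinv_mult by (simp add: mult.commute)

lemma tpow_zp: "tpow_fps n = zp (1 + fps_X) tinv_fps n"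
  by (simp add: tpow_fps_def zp_def)

lemma tpow_add: "tpow_fps (m + n) = tpow_fps m * tpow_fps n"
  unfolding tpow_zp by (rule zp_add[OF tinv_mult tinv_mult'])

lemma emb_lin: "emb_fps p = lin fps_const tpow_fps p"
  by (simp add: emb_fps_def lin_def)

lemma emb_add: "emb_fps (p + q) = emb_fps p + emb_fps q"
  unfolding emb_lin by (rule lin_add) (simp_all add: fps_const_add)

lemma emb_mult: "emb_fps (p * q) = emb_fps p * emb_fps q"
  unfolding emb_lin by (rule lin_mult) (simp_all add: fps_const_add fps_const_mult tpow_add)

lemma emb_single: "emb_fps (Poly_Mapping.single n r) = fps_const r * tpow_fps n"
  unfolding emb_lin by (rule lin_single) (simp_all add: fps_const_add)

lemma emb_one [simp]: "emb_fps 1 = 1"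
  using emb_single[of 0 1] by (simp add: tpow_fps_def)

lemma emb_zero [simp]: "emb_fps 0 = 0"
  by (simp add: emb_fps_def)

lemma emb_uminus: "emb_fps (- p) = - emb_fps p"
  using emb_add[of p "-p"] by (metis add.commute eq_neg_iff_add_eq_0 add.right_inverse emb_zero)

lemma emb_diff: "emb_fps (p - q) = emb_fps p - emb_fps q"
  using emb_add[of p "-q"] by (simp add: emb_uminus)

lemma emb_constRt [simp]: "emb_fps (constRt r) = fps_const r"
  by (simp add: constRt_def emb_single tpow_fps_def)

lemma emb_tRt [simp]: "emb_fps tRt = 1 + fps_X"
  by (simp add: tRt_def emb_single tpow_fps_def)

definition tinvRt :: Rt where "tinvRt = Poly_Mapping.single (-1) 1"

lemma emb_tinvRt [simp]: "emb_fps tinvRt = tinv_fps"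
  by (simp add: tinvRt_def emb_single tpow_fps_def)

lemma tRt_inv: "tRt * tinvRt = 1"
  by (simp add: tRt_def tinvRt_def mult_single)

lemma constRt_mult: "constRt (r * s) = constRt r * constRt s"
  by (simp add: constRt_def mult_single)
lemma constRt_add: "constRt (r + s) = constRt r + constRt s"
  by (simp add: constRt_def single_add)
lemma constRt_one [simp]: "constRt 1 = 1"
  by (simp add: constRt_def)
lemma constRt_diff: "constRt (r - s) = constRt r - constRt s"
  by (simp add: constRt_def single_diff)
lemma constRt_uminus: "constRt (- r) = - constRt r"
  by (simp add: constRt_def single_uminus)

lemma augR_lin: "augR r = lin id (\<lambda>_. 1) r"
  by (simp add: augR_def lin_def)

lemma augR_add: "augR (r + s) = augR r + augR s"
  unfolding augR_lin by (rule lin_add) simp_all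

lemma augR_mult: "augR (r * s) = augR r * augR s"
  unfolding augR_lin by (rule lin_mult) simp_all

lemma augR_single: "augR (Poly_Mapping.single n c) = c"
  unfolding augR_lin by (subst lin_single) simp_all

lemma augR_one [simp]: "augR 1 = 1"
  using augR_single[of 0 1] by simp

lemma augR_zero [simp]: "augR 0 = 0"
  by (simp add: augR_def)

lemma augR_uminus: "augR (- r) = - augR r"
  using augR_add[of r "-r"] by (metis add.commute eq_neg_iff_add_eq_0 add.right_inverse augR_zero)

lemma augR_diff: "augR (r - s) = augR r - augR s"
  using augR_add[of r "-s"] by (simp add: augR_uminus)

lemma augR_x [simp]: "augR xR = 1" by (simp add: xR_def augR_single)
lemma augR_y [simp]: "augR yR = 1" by (simp add: yR_def augR_single)

lemma augR_sum: "augR (sum f A) = (\<Sum>a\<in>A. augR (f a))"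
  by (induction A rule: infinite_finite_induct) (simp_all add: augR_add)



instantiation mat2 :: (comm_ring_1) "{zero, plus, minus, uminus}"
begin
definition zero_mat2 :: "'a mat2" where "zero_mat2 = M2 0 0 0 0"
fun plus_mat2 :: "'a mat2 \<Rightarrow> 'a mat2 \<Rightarrow> 'a mat2" where
  "plus_mat2 (M2 a b c d) (M2 e f g h) = M2 (a+e) (b+f) (c+g) (d+h)"
fun minus_mat2 :: "'a mat2 \<Rightarrow> 'a mat2 \<Rightarrow> 'a mat2" where
  "minus_mat2 (M2 a b c d) (M2 e f g h) = M2 (a-e) (b-f) (c-g) (d-h)"
fun uminus_mat2 :: "'a mat2 \<Rightarrow> 'a mat2" where
  "uminus_mat2 (M2 a b c d) = M2 (-a) (-b) (-c) (-d)"
instance ..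
end

instance mat2 :: (comm_ring_1) ring_1
proof
  fix p q r :: "'a mat2"
  show "p + q + r = p + (q + r)" by (cases p; cases q; cases r) (simp add: algebra_simps)
  show "p + q = q + p" by (cases p; cases q) (simp add: algebra_simps)
  show "0 + p = p" by (cases p) (simp add: zero_mat2_def)
  show "- p + p = 0" by (cases p) (simp add: zero_mat2_def)
  show "p - q = p + - q" by (cases p; cases q) simp
  show "(p + q) * r = p * r + q * r" by (cases p; cases q; cases r) (simp add: algebra_simps)
  show "p * (q + r) = p * q + p * r" by (cases p; cases q; cases r) (simp add: algebra_simps)
  show "(0::'a mat2) \<noteq> 1" by (simp add: zero_mat2_def one_mat2_def)
qed

lemma M2_one: "(1 :: 'a::comm_ring_1 mat2) = M2 1 0 0 1" by (simp add: one_mat2_def)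
lemma M2_zero: "(0 :: 'a::comm_ring_1 mat2) = M2 0 0 0 0" by (simp add: zero_mat2_def)

definition sc :: "'a::comm_ring_1 \<Rightarrow> 'a mat2" where "sc r = M2 r 0 0 r"

lemma sc_comm: "sc r * M = M * sc r" by (cases M) (simp add: sc_def algebra_simps)
lemma sc_mult: "sc (r * s) = sc r * sc s" by (simp add: sc_def)
lemma sc_add: "sc (r + s) = sc r + sc s" by (simp add: sc_def)
lemma sc_one [simp]: "sc 1 = 1" by (simp add: sc_def one_mat2_def)
lemma sc_zero [simp]: "sc 0 = 0" by (simp add: sc_def zero_mat2_def)
lemma sc_uminus: "sc (- r) = - sc r" by (simp add: sc_def)

lemma mat2_map_mult:
  assumes "\<And>u v. f (u + v) = f u + f v" "\<And>u v. f (u * v) = f u * f v"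
  shows "mat2_map f (A * B) = mat2_map f A * mat2_map f B"
  by (cases A; cases B) (simp add: assms)

lemma mat2_map_one:
  assumes "f 1 = 1" "f 0 = 0" shows "mat2_map f 1 = 1"
  by (simp add: one_mat2_def assms)

definition det2 :: "'a::comm_ring_1 mat2 \<Rightarrow> 'a" where
  "det2 M = (case M of M2 a b c d \<Rightarrow> a * d - b * c)"

lemma det2_mult: "det2 (A * B) = det2 A * det2 B"
  by (cases A; cases B) (simp add: det2_def algebra_simps)
lemma det2_one [simp]: "det2 1 = 1" by (simp add: det2_def one_mat2_def)

definition ev1 :: "Rt \<Rightarrow> R" where "ev1 p = fps_nth (emb_fps p) 0"

lemma ev1_add: "ev1 (p + q) = ev1 p + ev1 q" by (simp add: ev1_def emb_add)
lemma ev1_mult: "ev1 (p * q) = ev1 p * ev1 q" by (simp add: ev1_def emb_mult)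
lemma ev1_one [simp]: "ev1 1 = 1" by (simp add: ev1_def)
lemma ev1_zero [simp]: "ev1 0 = 0" by (simp add: ev1_def)
lemma ev1_diff: "ev1 (p - q) = ev1 p - ev1 q" by (simp add: ev1_def emb_diff)
lemma ev1_uminus: "ev1 (- p) = - ev1 p" by (simp add: ev1_def emb_uminus)
lemma ev1_const [simp]: "ev1 (constRt r) = r" by (simp add: ev1_def)
lemma ev1_t [simp]: "ev1 tRt = 1" by (simp add: ev1_def)
lemma ev1_tinv [simp]: "ev1 tinvRt = 1" by (simp add: ev1_def tinv_fps_def)

definition phi :: "Rt mat2 \<Rightarrow> R mat2" where "phi g = mat2_map ev1 g"

lemma phi_coeff: "coeff_mat g 0 = phi g"
  by (simp add: coeff_mat_def phi_def ev1_def[abs_def])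

lemma phi_mult: "phi (A * B) = phi A * phi B"
  unfolding phi_def by (rule mat2_map_mult) (simp_all add: ev1_add ev1_mult)
lemma phi_one [simp]: "phi 1 = 1"
  unfolding phi_def by (rule mat2_map_one) simp_all

lemma single00: "Poly_Mapping.single (0,0) (1::int) = (1::R)"
  by (metis single_one zero_prod_def)

definition xiR :: R where "xiR = Poly_Mapping.single (-1, 0) 1"
definition yiR :: R where "yiR = Poly_Mapping.single (0, -1) 1"

lemma x_inv: "xR * xiR = 1" by (simp add: xR_def xiR_def mult_single single00)
lemma y_inv: "yR * yiR = 1" by (simp add: yR_def yiR_def mult_single single00)

definition M1i :: "Rt mat2" where
  "M1i = M2 1 (- constRt (1 - yR) * constRt xiR) 0 (constRt xiR)"
definition M2Ti :: "Rt mat2" where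
  "M2Ti = M2 (constRt yiR * tinvRt) 0 (- (1 - constRt xR * tRt) * (constRt yiR * tinvRt)) 1"

lemma inv_upper:
  fixes u x xi :: "'a::comm_ring_1"
  assumes "x * xi = 1"
  shows "M2 1 u 0 x * M2 1 (- u * xi) 0 xi = 1" "M2 1 (- u * xi) 0 xi * M2 1 u 0 x = 1"
  using assms by (simp_all add: one_mat2_def algebra_simps)

lemma inv_lower:
  fixes p q pi :: "'a::comm_ring_1"
  assumes "p * pi = 1"
  shows "M2 p 0 q 1 * M2 pi 0 (- q * pi) 1 = 1" "M2 pi 0 (- q * pi) 1 * M2 p 0 q 1 = 1"
proof -
  have h: "p * (pi * q) = q" "pi * p = 1" using assms by (simp_all add: mult.assoc[symmetric] mult.commute)
  show "M2 p 0 q 1 * M2 pi 0 (- q * pi) 1 = 1" "M2 pi 0 (- q * pi) 1 * M2 p 0 q 1 = 1"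
    using assms h by (simp_all add: one_mat2_def algebra_simps)
qed

lemma M1_inv: "M1 * M1i = 1" "M1i * M1 = 1"
proof -
  have "constRt xR * constRt xiR = 1" by (simp add: constRt_mult[symmetric] x_inv)
  then show "M1 * M1i = 1" "M1i * M1 = 1"
    unfolding M1_def M1i_def using inv_upper by blast+
qed

lemma M2T_inv: "M2T * M2Ti = 1" "M2Ti * M2T = 1"
proof -
  have "(constRt yR * tRt) * (constRt yiR * tinvRt) = 1"
    using tRt_inv by (simp add: constRt_mult[symmetric] y_inv algebra_simps)
  then show "M2T * M2Ti = 1" "M2Ti * M2T = 1"
    unfolding M2T_def M2Ti_def using inv_lower by blast+
qed

lemma phi_M1: "phi M1 = M2 1 (1 - yR) 0 xR"
  by (simp add: phi_def M1_def)
lemma phi_M2T: "phi M2T = M2 yR 0 (1 - xR) 1"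
  by (simp add: phi_def M2T_def ev1_mult ev1_diff)
lemma phi_M1i: "phi M1i = M2 1 (- (1 - yR) * xiR) 0 xiR"
  by (simp add: phi_def M1i_def ev1_mult ev1_uminus ev1_diff) (simp add: algebra_simps)
lemma phi_M2Ti: "phi M2Ti = M2 yiR 0 (- (1 - xR) * yiR) 1"
  by (simp add: phi_def M2Ti_def ev1_mult ev1_diff ev1_uminus)

section \<open>The matrix E\<close>

definition EE :: "R mat2" where
  "EE = M2 ((1 - yR) * (xR - 1)) (- ((1 - yR) * (1 - yR))) ((xR - 1) * (xR - 1)) (- (xR - 1) * (1 - yR))"

lemma EE_a: "phi M1 * EE = sc xR * EE"
  unfolding phi_M1 EE_def sc_def
  by (simp only: times_mat2.simps mat2.inject) (intro conjI; (rule refl | algebra))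

lemma EE_a2: "EE * phi M1 = EE"
  unfolding phi_M1 EE_def
  by (simp only: times_mat2.simps mat2.inject) (intro conjI; (rule refl | algebra))

lemma EE_b: "phi M2T * EE = sc yR * EE"
  unfolding phi_M2T EE_def sc_def
  by (simp only: times_mat2.simps mat2.inject) (intro conjI; (rule refl | algebra))

lemma EE_b2: "EE * phi M2T = EE"
  unfolding phi_M2T EE_def
  by (simp only: times_mat2.simps mat2.inject) (intro conjI; (rule refl | algebra))

lemma EE_sq: "EE * EE = 0"
  unfolding EE_def zero_mat2_def
  by (simp only: times_mat2.simps mat2.inject) (intro conjI; (rule refl | algebra))

lemma phiM1_inv: "phi M1 * phi M1i = 1" "phi M1i * phi M1 = 1"
  using M1_inv by (simp_all add: phi_mult[symmetric])
lemma phiM2T_inv: "phi M2T * phi M2Ti = 1" "phi M2Ti * phi M2T = 1"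
  using M2T_inv by (simp_all add: phi_mult[symmetric])

lemma right_inv_trans:
  fixes A A' E :: "'a::monoid_mult"
  assumes "E * A = E" "A * A' = 1" shows "E * A' = E"
  by (metis assms mult.assoc mult_1_right)

lemma sc_inv_trans:
  fixes A A' E :: "'a::comm_ring_1 mat2"
  assumes "A * E = sc x * E" "A' * A = 1" "x * xi = 1" shows "A' * E = sc xi * E"
proof -
  have "A' * E = A' * (sc (xi * x) * E)" using assms(3) by (simp add: mult.commute)
  also have "\<dots> = sc xi * (A' * (A * E))"
    by (simp add: sc_mult assms(1) mult.assoc sc_comm[of _ A'] sc_comm[of _ E])
       (metis mult.assoc sc_comm)
  also have "\<dots> = sc xi * E" by (simp add: mult.assoc[symmetric] assms(2))
  finally show ?thesis .
qed

lemma EE_ai: "phi M1i * EE = sc xiR * EE"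
  by (rule sc_inv_trans[OF EE_a phiM1_inv(2) x_inv])
lemma EE_bi: "phi M2Ti * EE = sc yiR * EE"
  by (rule sc_inv_trans[OF EE_b phiM2T_inv(2) y_inv])
lemma EE_ai2: "EE * phi M1i = EE"
  by (rule right_inv_trans[OF EE_a2 phiM1_inv(1)])
lemma EE_bi2: "EE * phi M2Ti = EE"
  by (rule right_inv_trans[OF EE_b2 phiM2T_inv(1)])

lemma comm_aux1: "(1 - EE) * (phi M2T * phi M1) = phi M1 * phi M2T"
  unfolding phi_M1 phi_M2T EE_def one_mat2_def
  by (simp only: times_mat2.simps minus_mat2.simps mat2.inject) (intro conjI; (rule refl | algebra))

lemma comm_aux2: "(1 + EE) * (phi M1 * phi M2T) = phi M2T * phi M1"
  unfolding phi_M1 phi_M2T EE_def one_mat2_def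
  by (simp only: times_mat2.simps plus_mat2.simps mat2.inject) (intro conjI; (rule refl | algebra))

lemma phi_comm: "phi (M1 * M2T * M1i * M2Ti) = 1 - EE"
proof -
  have "1 - EE = (1 - EE) * (phi M2T * phi M1) * (phi M1i * phi M2Ti)"
    by (simp add: mult.assoc phiM1_inv phiM2T_inv)
       (simp add: mult.assoc[symmetric] phiM1_inv phiM2T_inv)
  then show ?thesis by (simp add: comm_aux1 phi_mult mult.assoc)
qed

lemma phi_comm': "phi (M2T * M1 * M2Ti * M1i) = 1 + EE"
proof -
  have "1 + EE = (1 + EE) * (phi M1 * phi M2T) * (phi M2Ti * phi M1i)"
    by (simp add: mult.assoc phiM1_inv phiM2T_inv)
       (simp add: mult.assoc[symmetric] phiM1_inv phiM2T_inv)
  then show ?thesis by (simp add: comm_aux2 phi_mult mult.assoc)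
qed



abbreviation Za :: "int \<Rightarrow> Rt mat2" where "Za \<equiv> zp M1 M1i"
abbreviation Zb :: "int \<Rightarrow> Rt mat2" where "Zb \<equiv> zp M2T M2Ti"

lemmas Za_add = zp_add[OF M1_inv]
lemmas Zb_add = zp_add[OF M2T_inv]
lemmas Z_simps [simp] = zp_inv1[OF M1_inv] zp_inv2[OF M1_inv] zp_inv1'[OF M1_inv] zp_inv2'[OF M1_inv]
  zp_inv1[OF M2T_inv] zp_inv2[OF M2T_inv] zp_inv1'[OF M2T_inv] zp_inv2'[OF M2T_inv]
  zp_0 zp_1[OF M1_inv] zp_1[OF M2T_inv] zp_m1[OF M1_inv] zp_m1[OF M2T_inv]

lemma inv_simps [simp]:
  "M1 * (M1i * y) = y" "M1i * (M1 * y) = y" "M2T * (M2Ti * y) = y" "M2Ti * (M2T * y) = y"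
  using M1_inv M2T_inv by (simp_all add: mult.assoc[symmetric])

lemma inv_simps2 [simp]: "M1 * M1i = 1" "M1i * M1 = 1" "M2T * M2Ti = 1" "M2Ti * M2T = 1"
  using M1_inv M2T_inv by simp_all

lemma FF_SG: "SG FF"
  unfolding FF_def by (rule gen_grp_SG) (use M1_inv M2T_inv in blast)

lemma M1_FF: "M1 \<in> FF" and M2T_FF: "M2T \<in> FF" and M1i_FF: "M1i \<in> FF" and M2Ti_FF: "M2Ti \<in> FF"
  unfolding FF_def using M1_inv M2T_inv by (auto intro: gen_grp.gen gen_grp.inv)

lemma Za_FF: "Za m \<in> FF" by (rule zp_in[OF M1_inv FF_SG M1_FF M1i_FF])
lemma Zb_FF: "Zb m \<in> FF" by (rule zp_in[OF M2T_inv FF_SG M2T_FF M2Ti_FF])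

definition F1 :: "Rt mat2 set" where "F1 = derived FF"
definition NN :: "Rt mat2 set" where "NN = derived F1"

lemma F1_SG: "SG F1" unfolding F1_def by (rule derived_SG)
lemma NN_SG: "SG NN" unfolding NN_def by (rule derived_SG)
lemma F1_FF: "F1 \<subseteq> FF" unfolding F1_def by (rule derived_subset[OF FF_SG])
lemma NN_F1: "NN \<subseteq> F1" unfolding NN_def by (rule derived_subset[OF F1_SG])
lemma NC_F1: "NC FF F1" unfolding F1_def by (rule NC_derived[OF NC_self[OF FF_SG]])
lemma NC_NN: "NC FF NN" unfolding NN_def by (rule NC_derived[OF NC_F1])

lemma derived2: "derived_series 2 FF = NN"
  by (simp add: derived_series_def NN_def F1_def numeral_2_eq_2)

lemma comm_F1:
  assumes "a \<in> FF" "b \<in> FF" "a * a' = 1" "a' * a = 1" "b * b' = 1" "b' * b = 1"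
  shows "a * b * a' * b' \<in> F1"
  unfolding F1_def derived_def using assms
  by (intro gen_grp.gen) (auto simp: commutators_def)

lemma comm_NN:
  assumes "a \<in> F1" "b \<in> F1" "a * a' = 1" "a' * a = 1" "b * b' = 1" "b' * b = 1"
  shows "a * b * a' * b' \<in> NN"
  unfolding NN_def derived_def using assms
  by (intro gen_grp.gen) (auto simp: commutators_def)

section \<open>Congruence modulo NN\<close>

definition eqv :: "Rt mat2 \<Rightarrow> Rt mat2 \<Rightarrow> bool" where
  "eqv g h \<longleftrightarrow> h \<in> FF \<and> (\<exists>n\<in>NN. g = n * h)"

lemma eqv_refl: "h \<in> FF \<Longrightarrow> eqv h h"
  unfolding eqv_def using SG_one[OF NN_SG] by force

lemma eqv_trans: "eqv g h \<Longrightarrow> eqv h k \<Longrightarrow> eqv g k"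
  unfolding eqv_def using SG_mult[OF NN_SG] by (metis mult.assoc)

lemma eqv_FF: "eqv g h \<Longrightarrow> g \<in> FF"
  unfolding eqv_def using NN_F1 F1_FF SG_mult[OF FF_SG] by blast

lemma eqv_mult:
  assumes "eqv g1 h1" "eqv g2 h2" shows "eqv (g1 * g2) (h1 * h2)"
proof -
  from assms obtain n1 n2 where n: "n1 \<in> NN" "n2 \<in> NN" "g1 = n1 * h1" "g2 = n2 * h2" "h1 \<in> FF" "h2 \<in> FF"
    by (auto simp: eqv_def)
  obtain h1' where h1': "h1' \<in> FF" "h1 * h1' = 1" "h1' * h1 = 1" using SG_inv_ex[OF FF_SG n(5)] by blast
  have c: "h1 * n2 * h1' \<in> NN" by (rule NCD[OF NC_NN n(5) h1'(2,3) n(2)])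
  have "g1 * g2 = (n1 * (h1 * n2 * h1')) * (h1 * h2)"
    using n h1' by (simp add: mult.assoc) (simp add: mult.assoc[symmetric])
  moreover have "n1 * (h1 * n2 * h1') \<in> NN" using SG_mult[OF NN_SG n(1) c] .
  moreover have "h1 * h2 \<in> FF" using SG_mult[OF FF_SG n(5,6)] .
  ultimately show ?thesis unfolding eqv_def by blast
qed

lemma eqv_conjF1:
  assumes "e \<in> F1" "u \<in> F1" "e * e' = 1" "e' * e = 1"
  shows "eqv (e * u * e') u"
proof -
  obtain u' where u': "u' \<in> F1" "u * u' = 1" "u' * u = 1" using SG_inv_ex[OF F1_SG assms(2)] by blast
  have "e * u * e' * u' \<in> NN" by (rule comm_NN[OF assms(1,2,3,4) u'(2,3)])
  moreover have "e * u * e' = (e * u * e' * u') * u" using u' by (simp add: mult.assoc)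
  ultimately show ?thesis using assms(2) F1_FF unfolding eqv_def by blast
qed

lemma eqv_NN: "eqv g h \<Longrightarrow> h \<in> NN \<Longrightarrow> g \<in> NN"
  unfolding eqv_def using SG_mult[OF NN_SG] by blast

definition Cm :: "bool \<Rightarrow> Rt mat2" where
  "Cm s = (if s then M1 * M2T * M1i * M2Ti else M2T * M1 * M2Ti * M1i)"

lemma Cm_F1: "Cm s \<in> F1"
  unfolding Cm_def using M1_FF M2T_FF M1_inv M2T_inv by (auto intro: comm_F1)

lemma Cm_inv: "Cm s * Cm (\<not> s) = 1"
  by (cases s) (simp_all add: Cm_def mult.assoc)

definition ck :: "int \<times> int \<Rightarrow> bool \<Rightarrow> Rt mat2" where
  "ck k s = Zb (snd k) * Za (fst k) * Cm s * Za (- fst k) * Zb (- snd k)"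

lemma conj_F1: "g \<in> FF \<Longrightarrow> g * g' = 1 \<Longrightarrow> g' * g = 1 \<Longrightarrow> u \<in> F1 \<Longrightarrow> g * u * g' \<in> F1"
  by (rule NCD[OF NC_F1])

lemma Za_conj_F1: "u \<in> F1 \<Longrightarrow> Za i * u * Za (- i) \<in> F1"
  by (rule conj_F1[OF Za_FF]) simp_all
lemma Zb_conj_F1: "u \<in> F1 \<Longrightarrow> Zb i * u * Zb (- i) \<in> F1"
  by (rule conj_F1[OF Zb_FF]) simp_all

lemma ck_F1: "ck k s \<in> F1"
proof -
  have "ck k s = Zb (snd k) * (Za (fst k) * Cm s * Za (- fst k)) * Zb (- snd k)"
    by (simp add: ck_def mult.assoc)
  then show ?thesis using Za_conj_F1[OF Cm_F1] Zb_conj_F1 by simp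
qed

lemma ck_inv: "ck k s * ck k (\<not> s) = 1"
proof -
  have "ck k s * ck k (\<not> s) = Zb (snd k) * (Za (fst k) * (Cm s * Cm (\<not> s)) * Za (- fst k)) * Zb (- snd k)"
    by (simp add: ck_def mult.assoc)
  then show ?thesis by (simp add: Cm_inv)
qed

lemma ck_inv': "ck k (\<not> s) * ck k s = 1"
  using ck_inv[of k "\<not> s"] by simp

definition PL :: "((int \<times> int) \<times> bool) list \<Rightarrow> Rt mat2" where
  "PL L = prod_list (map (\<lambda>(k, s). ck k s) L)"

lemma PL_Nil [simp]: "PL [] = 1" by (simp add: PL_def)
lemma PL_Cons [simp]: "PL ((k, s) # L) = ck k s * PL L" by (simp add: PL_def)
lemma PL_append: "PL (L1 @ L2) = PL L1 * PL L2" by (simp add: PL_def)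

lemma PL_F1: "PL L \<in> F1"
  by (induction L) (auto simp: SG_one[OF F1_SG] SG_mult[OF F1_SG ck_F1])

lemma PL_FF: "PL L \<in> FF" using PL_F1 F1_FF by blast

definition shiftb :: "int \<Rightarrow> ((int \<times> int) \<times> bool) list \<Rightarrow> ((int \<times> int) \<times> bool) list" where
  "shiftb q L = map (\<lambda>((i, j), s). ((i, j + q), s)) L"

lemma ck_conj_b: "Zb q * ck (i, j) s * Zb (- q) = ck (i, j + q) s"
proof -
  have 1: "Zb (j + q) = Zb q * Zb j" using Zb_add[of q j] by (simp add: add.commute)
  have 2: "Zb (- j - q) = Zb (- j) * Zb (- q)" using Zb_add[of "-j" "-q"] by simp
  show ?thesis unfolding ck_def by (simp add: 1 2 mult.assoc)
qed

lemma PL_conj_b: "Zb q * PL L * Zb (- q) = PL (shiftb q L)"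
proof (induction L)
  case Nil then show ?case by (simp add: shiftb_def)
next
  case (Cons x L)
  obtain i j s where x: "x = ((i, j), s)" by (metis prod.exhaust)
  have "Zb q * PL (x # L) * Zb (- q) = (Zb q * ck (i, j) s * Zb (- q)) * (Zb q * PL L * Zb (- q))"
    by (simp add: x mult.assoc)
  then show ?case using Cons by (simp add: ck_conj_b x shiftb_def)
qed

lemma ck_conj_a: "eqv (Za p * ck (i, j) s * Za (- p)) (ck (i + p, j) s)"
proof -
  define e where "e = Za (- p) * Zb (- j) * Za p * Zb j"
  define e' where "e' = Zb (- j) * Za (- p) * Zb j * Za p"
  define u where "u = Za i * Cm s * Za (- i)"
  define X where "X = Zb j * Za p"
  define X' where "X' = Za (- p) * Zb (- j)"
  have e_F1: "e \<in> F1" unfolding e_def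
    by (rule comm_F1[OF Za_FF Zb_FF]) simp_all
  have ee: "e * e' = 1" "e' * e = 1" unfolding e_def e'_def by (simp_all add: mult.assoc)
  have u_F1: "u \<in> F1" unfolding u_def by (rule Za_conj_F1[OF Cm_F1])
  have "eqv (e * u * e') u" by (rule eqv_conjF1[OF e_F1 u_F1 ee])
  then have "eqv (X * (e * u * e') * X') (X * u * X')"
    using X_def X'_def Za_FF Zb_FF SG_mult[OF FF_SG]
    by (intro eqv_mult eqv_refl) auto
  moreover have "X * (e * u * e') * X' = Za p * ck (i, j) s * Za (- p)"
    unfolding X_def X'_def e_def e'_def u_def ck_def by (simp add: mult.assoc)
  moreover have "X * u * X' = ck (i + p, j) s"
  proof -
    have 1: "Za (i + p) = Za p * Za i" using Za_add[of p i] by (simp add: add.commute)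
    have 2: "Za (- i - p) = Za (- i) * Za (- p)" using Za_add[of "-i" "-p"] by simp
    show ?thesis unfolding X_def X'_def u_def ck_def by (simp add: 1 2 mult.assoc)
  qed
  ultimately show ?thesis by simp
qed

definition EB :: "bool \<Rightarrow> Rt mat2" where "EB s = (if s then M2T else M2Ti)"
definition EB' :: "bool \<Rightarrow> Rt mat2" where "EB' s = (if s then M2Ti else M2T)"

lemma EB_simps [simp]: "EB s * (EB' s * y) = y" "EB' s * (EB s * y) = y" "EB s * EB' s = 1" "EB' s * EB s = 1"
  by (cases s; simp add: EB_def EB'_def)+

definition em :: "int \<Rightarrow> bool \<Rightarrow> Rt mat2" where
  "em m s = Za (- m) * EB' s * Za m * EB s"

lemma em_rec:
  assumes "d = 1 \<or> d = -1"
  shows "em (m + d) s = Za (- m) * em d s * Za m * em m s"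
proof -
  have 1: "Za (m + d) = Za d * Za m" using Za_add[of d m] by (simp add: add.commute)
  have 2: "Za (- m - d) = Za (- m) * Za (- d)" using Za_add[of "-m" "-d"] by simp
  show ?thesis by (simp add: em_def 1 2 mult.assoc)
qed

lemma em_base:
  "em 1 True = ck (-1, -1) True" "em 1 False = ck (-1, 0) False"
  "em (-1) True = ck (0, -1) False" "em (-1) False = ck (0, 0) True"
  by (simp_all add: em_def ck_def Cm_def EB_def EB'_def mult.assoc)

lemma em_PL: "\<exists>L. eqv (em m s) (PL L)"
proof (induction m rule: int_induct[where k=0])
  case base
  have "em 0 s = PL []" by (simp add: em_def)
  then show ?case using eqv_refl[OF PL_FF] by metis
next
  case (step1 m)
  then obtain L where L: "eqv (em m s) (PL L)" by blast
  have "em 1 s = ck (if s then (-1,-1) else (-1,0)) s" by (cases s) (simp_all add: em_base)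
  then obtain k s1 where b: "em 1 s = ck k s1" by blast
  obtain i j where k: "k = (i, j)" by (cases k)
  have "eqv (Za (- m) * ck k s1 * Za (- (- m))) (ck (i + - m, j) s1)"
    unfolding k by (rule ck_conj_a)
  then have "eqv (Za (- m) * ck k s1 * Za m * em m s) (ck (i + - m, j) s1 * PL L)"
    using L by (simp add: eqv_mult)
  then have "eqv (em (m + 1) s) (PL (((i + - m, j), s1) # L))"
    using em_rec[of 1 m s] b by simp
  then show ?case by blast
next
  case (step2 m)
  then obtain L where L: "eqv (em m s) (PL L)" by blast
  have "em (-1) s = ck (if s then (0,-1) else (0,0)) (\<not> s)" by (cases s) (simp_all add: em_base)
  then obtain k s1 where b: "em (-1) s = ck k s1" by blast
  obtain i j where k: "k = (i, j)" by (cases k)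
  have "eqv (Za (- m) * ck k s1 * Za (- (- m))) (ck (i + - m, j) s1)"
    unfolding k by (rule ck_conj_a)
  then have "eqv (Za (- m) * ck k s1 * Za m * em m s) (ck (i + - m, j) s1 * PL L)"
    using L by (simp add: eqv_mult)
  then have "eqv (em (m - 1) s) (PL (((i + - m, j), s1) # L))"
    using em_rec[of "-1" m s] b by simp
  then show ?case by blast
qed

section \<open>Normal form\<close>

definition QF :: "Rt mat2 \<Rightarrow> bool" where
  "QF g \<longleftrightarrow> (\<exists>m n L. eqv g (Za m * Zb n * PL L))"

lemma Q_prod_FF: "Za m * Zb n * PL L \<in> FF"
  using Za_FF Zb_FF PL_FF SG_mult[OF FF_SG] by blast

lemma QF_a: "QF g \<Longrightarrow> QF (M1 * g)" and QF_ai: "QF g \<Longrightarrow> QF (M1i * g)"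
proof -
  assume "QF g"
  then obtain m n L where g: "eqv g (Za m * Zb n * PL L)" by (auto simp: QF_def)
  have "eqv (M1 * g) (M1 * (Za m * Zb n * PL L))" by (rule eqv_mult[OF eqv_refl[OF M1_FF] g])
  moreover have "M1 * (Za m * Zb n * PL L) = Za (m + 1) * Zb n * PL L"
    using Za_add[of 1 m] by (simp add: add.commute mult.assoc)
  ultimately show "QF (M1 * g)" unfolding QF_def by metis
  have "eqv (M1i * g) (M1i * (Za m * Zb n * PL L))" by (rule eqv_mult[OF eqv_refl[OF M1i_FF] g])
  moreover have "M1i * (Za m * Zb n * PL L) = Za (m - 1) * Zb n * PL L"
    using Za_add[of "-1" m] by (simp add: add.commute mult.assoc)
  ultimately show "QF (M1i * g)" unfolding QF_def by metis
qed

lemma QF_bgen: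
  assumes "QF g" "B = EB' s" "B' = EB s" "d = (if s then -1 else (1::int))"
  shows "QF (B * g)"
proof -
  from assms(1) obtain m n L where g: "eqv g (Za m * Zb n * PL L)" by (auto simp: QF_def)
  obtain L1 where L1: "eqv (em m s) (PL L1)" using em_PL by blast
  have BFF: "B \<in> FF" using assms(2) M2T_FF M2Ti_FF by (auto simp: EB'_def)
  have Bd: "Zb (n + d) = B * Zb n"
    using Zb_add[of d n] assms(2,4) by (cases s) (simp_all add: EB'_def add.commute)
  have e1: "eqv (B * g) (B * (Za m * Zb n * PL L))" by (rule eqv_mult[OF eqv_refl[OF BFF] g])
  have e2: "B * (Za m * Zb n * PL L) = Za m * em m s * Zb (n + d) * PL L"
    unfolding Bd em_def using assms(2,3) by (simp add: mult.assoc)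
  have e3: "eqv (Za m * em m s * Zb (n + d) * PL L) (Za m * PL L1 * Zb (n + d) * PL L)"
    by (intro eqv_mult eqv_refl L1 Za_FF Zb_FF PL_FF)
  have e4: "Za m * PL L1 * Zb (n + d) * PL L = Za m * Zb (n + d) * PL (shiftb (- (n + d)) L1 @ L)"
  proof -
    have "PL (shiftb (- (n + d)) L1) = Zb (- (n + d)) * PL L1 * Zb (n + d)"
      using PL_conj_b[of "- (n + d)" L1] by (simp add: add.commute)
    moreover have "Zb (n + d) * (Zb (- n - d) * y) = y" for y
      using zp_inv1'[OF M2T_inv, of "n + d" y] by simp
    ultimately show ?thesis by (simp add: PL_append mult.assoc)
  qed
  have "eqv (B * g) (Za m * Zb (n + d) * PL (shiftb (- (n + d)) L1 @ L))"
    using eqv_trans[OF e1[unfolded e2] e3[unfolded e4]] .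
  then show ?thesis unfolding QF_def by blast
qed

lemma QF_b: "QF g \<Longrightarrow> QF (M2T * g)"
  by (rule QF_bgen[of g M2T False M2Ti 1]) (simp_all add: EB_def EB'_def)
lemma QF_bi: "QF g \<Longrightarrow> QF (M2Ti * g)"
  by (rule QF_bgen[of g M2Ti True M2T "-1"]) (simp_all add: EB_def EB'_def)

lemma NF: assumes "g \<in> FF" shows "\<exists>m n L. eqv g (Za m * Zb n * PL L)"
proof -
  have "\<forall>x. QF x \<longrightarrow> QF (h * x)" if "h \<in> gen_grp {M1, M2T}" for h
    using that
  proof induction
    case one then show ?case by simp
  next
    case (gen x) then show ?case using QF_a QF_b by auto
  next
    case (inv x y)
    then have "y = M1i \<or> y = M2Ti" using M1_inv M2T_inv inv_unique by blast
    then show ?case using QF_ai QF_bi by auto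
  next
    case (mult a b) then show ?case by (simp add: mult.assoc)
  qed
  moreover have "QF 1"
  proof -
    have e: "Za 0 * Zb 0 * PL [] = 1" by simp
    have "eqv 1 (Za 0 * Zb 0 * PL [])" unfolding e by (rule eqv_refl[OF SG_one[OF FF_SG]])
    then show "QF 1" unfolding QF_def by blast
  qed
  ultimately have "QF (g * 1)" using assms unfolding FF_def by blast
  then show ?thesis by (simp add: QF_def)
qed



section \<open>phi maps NN to the identity\<close>

abbreviation al :: R where "al \<equiv> 1 - yR"
abbreviation be :: R where "be \<equiv> xR - 1"

definition WW :: "R mat2" where "WW = M2 be (- al) 0 0"
definition VV :: "R mat2" where "VV = M2 al 0 be 0"

lemma WV_facts:
  "WW * phi M1 = WW" "phi M1 * VV = sc xR * VV" "WW * phi M2T = WW" "phi M2T * VV = sc yR * VV"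
  unfolding WW_def VV_def phi_M1 phi_M2T sc_def
  by (simp_all only: times_mat2.simps mat2.inject) (intro conjI; (rule refl | algebra))+

definition G1 :: "R mat2 set" where
  "G1 = {U. WW * U = WW \<and> (\<exists>l m. l * m = 1 \<and> U * VV = sc l * VV)}"
definition YY :: "R mat2 set" where
  "YY = {U. WW * U = WW \<and> U * VV = VV}"

lemma sc_move: "A * (sc r * X) = sc r * (A * X)"
  by (metis mult.assoc sc_comm)

lemma inv_V:
  assumes "U * VV = sc l * VV" "l * m = 1" "U' * U = 1"
  shows "U' * VV = sc m * VV"
proof -
  have "U' * VV = U' * (sc (m * l) * VV)" using assms(2) by (simp add: mult.commute)
  also have "\<dots> = U' * (sc m * (sc l * VV))" by (simp only: sc_mult mult.assoc)
  also have "\<dots> = sc m * (U' * (sc l * VV))" by (rule sc_move)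
  also have "\<dots> = sc m * (U' * (U * VV))" by (simp only: assms(1))
  also have "\<dots> = sc m * VV" by (simp only: mult.assoc[symmetric] assms(3) mult_1_left)
  finally show ?thesis .
qed

lemma inv_W: "WW * U = WW \<Longrightarrow> U * U' = 1 \<Longrightarrow> WW * U' = WW"
  by (metis mult.assoc mult_1_right)

lemma G1_mult: "U1 \<in> G1 \<Longrightarrow> U2 \<in> G1 \<Longrightarrow> U1 * U2 \<in> G1"
proof -
  assume a: "U1 \<in> G1" "U2 \<in> G1"
  then obtain l1 m1 l2 m2 where l: "l1 * m1 = 1" "U1 * VV = sc l1 * VV" "l2 * m2 = 1" "U2 * VV = sc l2 * VV"
    and w: "WW * U1 = WW" "WW * U2 = WW" by (auto simp: G1_def)
  have "WW * (U1 * U2) = WW" using w by (simp only: mult.assoc[symmetric])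
  moreover have "(l2 * l1) * (m1 * m2) = 1" using l by (metis mult.assoc mult.left_commute mult_1_right)
  moreover have "U1 * U2 * VV = sc (l2 * l1) * VV"
  proof -
    have "U1 * U2 * VV = U1 * (sc l2 * VV)" by (simp only: mult.assoc l(4))
    also have "\<dots> = sc l2 * (U1 * VV)" by (rule sc_move)
    also have "\<dots> = sc (l2 * l1) * VV" by (simp only: l(2) sc_mult mult.assoc)
    finally show ?thesis .
  qed
  ultimately show ?thesis unfolding G1_def by blast
qed

lemma G1_inv: "U \<in> G1 \<Longrightarrow> U * U' = 1 \<Longrightarrow> U' * U = 1 \<Longrightarrow> U' \<in> G1"
proof -
  assume a: "U \<in> G1" "U * U' = 1" "U' * U = 1"
  then obtain l m where l: "l * m = 1" "U * VV = sc l * VV" and w: "WW * U = WW" by (auto simp: G1_def)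
  have "WW * U' = WW" by (rule inv_W[OF w a(2)])
  moreover have "U' * VV = sc m * VV" by (rule inv_V[OF l(2) l(1) a(3)])
  moreover have "m * l = 1" using l by (simp add: mult.commute)
  ultimately show ?thesis unfolding G1_def by blast
qed

lemma G1_one: "1 \<in> G1" unfolding G1_def by (auto intro: exI[of _ 1])

lemma phi_M1_G1: "phi M1 \<in> G1" and phi_M2T_G1: "phi M2T \<in> G1"
  unfolding G1_def using WV_facts x_inv y_inv by blast+

lemma phi_FF_G1: "g \<in> FF \<Longrightarrow> phi g \<in> G1"
  unfolding FF_def
proof (induction rule: gen_grp.induct)
  case one then show ?case by (simp add: G1_one)
next
  case (gen x) then show ?case using phi_M1_G1 phi_M2T_G1 by auto
next
  case (inv x y)
  have "phi x \<in> G1" using inv phi_M1_G1 phi_M2T_G1 by auto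
  then show ?case using G1_inv inv by (metis phi_mult phi_one)
next
  case (mult a b) then show ?case by (simp add: phi_mult G1_mult)
qed

lemma Y_mult: "U1 \<in> YY \<Longrightarrow> U2 \<in> YY \<Longrightarrow> U1 * U2 \<in> YY"
  unfolding YY_def by (simp add: mult.assoc[symmetric]) (simp add: mult.assoc)

lemma Y_inv: "U \<in> YY \<Longrightarrow> U * U' = 1 \<Longrightarrow> U' * U = 1 \<Longrightarrow> U' \<in> YY"
proof -
  assume a: "U \<in> YY" "U * U' = 1" "U' * U = 1"
  then have w: "WW * U = WW" and v: "U * VV = VV" by (auto simp: YY_def)
  have "WW * U' = WW" by (rule inv_W[OF w a(2)])
  moreover have "U' * VV = VV"
  proof -
    have "U' * VV = U' * (U * VV)" by (simp only: v)
    also have "\<dots> = VV" by (simp only: mult.assoc[symmetric] a(3) mult_1_left)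
    finally show ?thesis .
  qed
  ultimately show ?thesis by (simp add: YY_def)
qed

lemma comm_G1_Y:
  assumes "U1 \<in> G1" "U2 \<in> G1" "U1 * U1' = 1" "U1' * U1 = 1" "U2 * U2' = 1" "U2' * U2 = 1"
  shows "U1 * U2 * U1' * U2' \<in> YY"
proof -
  obtain l1 m1 where l1: "l1 * m1 = 1" "U1 * VV = sc l1 * VV" using assms(1) by (auto simp: G1_def)
  obtain l2 m2 where l2: "l2 * m2 = 1" "U2 * VV = sc l2 * VV" using assms(2) by (auto simp: G1_def)
  have i1: "U1' * VV = sc m1 * VV" by (rule inv_V[OF l1(2) l1(1) assms(4)])
  have i2: "U2' * VV = sc m2 * VV" by (rule inv_V[OF l2(2) l2(1) assms(6)])
  have "U1 * U2 * U1' * U2' \<in> G1"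
    using assms G1_mult G1_inv by metis
  then have w: "WW * (U1 * U2 * U1' * U2') = WW" by (simp add: G1_def)
  have "U1 * U2 * U1' * U2' * VV = U1 * (U2 * (U1' * (sc m2 * VV)))" by (simp only: mult.assoc i2)
  also have "\<dots> = sc m2 * (U1 * (U2 * (U1' * VV)))" by (simp only: sc_move[of U1' m2] sc_move[of U2 m2] sc_move[of U1 m2])
  also have "\<dots> = sc m2 * (U1 * (U2 * (sc m1 * VV)))" by (simp only: i1)
  also have "\<dots> = sc m2 * (sc m1 * (U1 * (U2 * VV)))" by (simp only: sc_move[of U2 m1] sc_move[of U1 m1])
  also have "\<dots> = sc m2 * (sc m1 * (U1 * (sc l2 * VV)))" by (simp only: l2(2))
  also have "\<dots> = sc m2 * (sc m1 * (sc l2 * (U1 * VV)))" by (simp only: sc_move[of U1 l2])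
  also have "\<dots> = sc m2 * (sc m1 * (sc l2 * (sc l1 * VV)))" by (simp only: l1(2))
  also have "\<dots> = sc (m2 * m1 * l2 * l1) * VV" by (simp only: sc_mult mult.assoc)
  also have "m2 * m1 * l2 * l1 = 1" using l1 l2 by (metis mult.assoc mult.commute mult_1_right)
  finally show ?thesis using w unfolding YY_def by simp
qed

lemma phi_F1_Y: "g \<in> F1 \<Longrightarrow> phi g \<in> YY"
  unfolding F1_def derived_def
proof (induction rule: gen_grp.induct)
  case one then show ?case by (simp add: YY_def)
next
  case (gen x)
  then obtain a b a' b' where x: "x = a * b * a' * b'" "a \<in> FF" "b \<in> FF" "a * a' = 1" "a' * a = 1" "b * b' = 1" "b' * b = 1"
    by (auto simp: commutators_def)
  show ?case unfolding x(1) phi_mult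
    by (rule comm_G1_Y) (use x phi_FF_G1 in \<open>simp_all add: phi_mult[symmetric]\<close>)
next
  case (inv x y)
  have "phi x \<in> YY"
  proof -
    obtain a b a' b' where x: "x = a * b * a' * b'" "a \<in> FF" "b \<in> FF" "a * a' = 1" "a' * a = 1" "b * b' = 1" "b' * b = 1"
      using inv by (auto simp: commutators_def)
    show ?thesis unfolding x(1) phi_mult
      by (rule comm_G1_Y) (use x phi_FF_G1 in \<open>simp_all add: phi_mult[symmetric]\<close>)
  qed
  then show ?case using Y_inv inv by (metis phi_mult phi_one)
next
  case (mult a b) then show ?case by (simp add: phi_mult Y_mult)
qed

lemma N_prod_gen:
  fixes A B :: "'a::idom"
  assumes "B \<noteq> 0"
    and h1: "B * a + - A * c = 0" "a * A + b * B = 0" "c * A + d * B = 0"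
    and h2: "B * e + - A * g = 0" "B * f + - A * h = 0"
  shows "M2 a b c d * M2 e f g h = 0"
proof -
  have i1: "B * (a * e + b * g) = a * (B * e + - A * g) + g * (a * A + b * B)" by (simp add: algebra_simps)
  have i2: "B * (a * f + b * h) = a * (B * f + - A * h) + h * (a * A + b * B)" by (simp add: algebra_simps)
  have i3: "B * (c * e + d * g) = c * (B * e + - A * g) + g * (c * A + d * B)" by (simp add: algebra_simps)
  have i4: "B * (c * f + d * h) = c * (B * f + - A * h) + h * (c * A + d * B)" by (simp add: algebra_simps)
  show ?thesis using i1 i2 i3 i4 h1 h2 assms(1) by (simp add: zero_mat2_def)
qed

lemma be_nz: "be \<noteq> 0"
proof
  assume "be = 0"
  then have "xR = 1" by simp
  then have "Poly_Mapping.lookup xR (1, 0) = Poly_Mapping.lookup (1::R) (1, 0)" by simp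
  then show False by (simp add: xR_def single00[symmetric] lookup_single)
qed

lemma N_prod:
  assumes "WW * N1 = 0" "N1 * VV = 0" "WW * N2 = 0" "N2 * VV = 0"
  shows "N1 * N2 = 0"
proof -
  obtain a b c d where u1: "N1 = M2 a b c d" by (cases N1)
  obtain e f g h where u2: "N2 = M2 e f g h" by (cases N2)
  have h1: "be * a + - al * c = 0 \<and> a * al + b * be = 0 \<and> c * al + d * be = 0"
    using assms(1,2) unfolding u1 WW_def VV_def zero_mat2_def
    by (simp only: times_mat2.simps mat2.inject; blast)
  have h2: "be * e + - al * g = 0 \<and> be * f + - al * h = 0"
    using assms(3) unfolding u2 WW_def zero_mat2_def
    by (simp only: times_mat2.simps mat2.inject; blast)
  show ?thesis unfolding u1 u2
    by (rule N_prod_gen[OF be_nz, where A = al]) (use h1 h2 in blast)+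
qed

lemma Y_N: "U \<in> YY \<Longrightarrow> WW * (U - 1) = 0 \<and> (U - 1) * VV = 0"
  unfolding YY_def by (simp add: right_diff_distrib left_diff_distrib)

lemma Y_comm: "U1 \<in> YY \<Longrightarrow> U2 \<in> YY \<Longrightarrow> U1 * U2 = U2 * U1"
proof -
  assume a: "U1 \<in> YY" "U2 \<in> YY"
  define N1 where "N1 = U1 - 1"
  define N2 where "N2 = U2 - 1"
  have z: "N1 * N2 = 0" "N2 * N1 = 0" using Y_N[OF a(1)] Y_N[OF a(2)] N_prod unfolding N1_def N2_def by blast+
  have "U1 = 1 + N1" "U2 = 1 + N2" by (simp_all add: N1_def N2_def)
  then show ?thesis using z by (simp add: algebra_simps)
qed

lemma phi_NN: "g \<in> NN \<Longrightarrow> phi g = 1"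
  unfolding NN_def derived_def
proof (induction rule: gen_grp.induct)
  case one then show ?case by simp
next
  case (gen x)
  then obtain a b a' b' where x: "x = a * b * a' * b'" "a \<in> F1" "b \<in> F1" "a * a' = 1" "a' * a = 1" "b * b' = 1" "b' * b = 1"
    by (auto simp: commutators_def)
  have c: "phi a * phi b = phi b * phi a" using Y_comm phi_F1_Y x(2,3) by blast
  have "phi x = phi b * (phi a * phi a') * phi b'" unfolding x(1) phi_mult using c
    by (metis mult.assoc)
  also have "\<dots> = 1" using x by (simp add: phi_mult[symmetric])
  finally show ?case .
next
  case (inv x y)
  have "phi x = 1"
  proof -
    obtain a b a' b' where x: "x = a * b * a' * b'" "a \<in> F1" "b \<in> F1" "a * a' = 1" "a' * a = 1" "b * b' = 1" "b' * b = 1"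
      using inv by (auto simp: commutators_def)
    have c: "phi a * phi b = phi b * phi a" using Y_comm phi_F1_Y x(2,3) by blast
    have "phi x = phi b * (phi a * phi a') * phi b'" unfolding x(1) phi_mult using c
      by (metis mult.assoc)
    also have "\<dots> = 1" using x by (simp add: phi_mult[symmetric])
    finally show ?thesis .
  qed
  then show ?case using inv by (metis phi_mult phi_one mult_1_left)
next
  case (mult a b) then show ?case by (simp add: phi_mult)
qed



lemma xi_inv: "xiR * xR = 1" and yi_inv: "yiR * yR = 1"
  using x_inv y_inv by (simp_all add: mult.commute)

lemma xR_single: "xR = Poly_Mapping.single (1, 0) 1" by (simp add: xR_def)

lemma phiZa_E: "phi (Za i) * EE = sc (Poly_Mapping.single (i, 0) 1) * EE"
proof (induction i rule: int_induct[where k=0])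
  case base then show ?case by (simp add: single00)
next
  case (step1 i)
  have "phi (Za (i + 1)) * EE = phi (Za i) * (phi M1 * EE)"
    by (simp add: zp_succ[OF M1_inv] phi_mult mult.assoc)
  also have "\<dots> = sc xR * (phi (Za i) * EE)" by (simp only: EE_a sc_move)
  also have "\<dots> = sc (Poly_Mapping.single (i + 1, 0) 1) * EE"
    by (simp only: step1 mult.assoc[symmetric] sc_mult[symmetric]) (simp add: xR_def mult_single add.commute)
  finally show ?case .
next
  case (step2 i)
  have "phi (Za (i - 1)) * EE = phi (Za i) * (phi M1i * EE)"
    by (simp add: zp_pred[OF M1_inv] phi_mult mult.assoc)
  also have "\<dots> = sc xiR * (phi (Za i) * EE)" by (simp only: EE_ai sc_move)
  also have "\<dots> = sc (Poly_Mapping.single (i - 1, 0) 1) * EE"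
    by (simp only: step2 mult.assoc[symmetric] sc_mult[symmetric]) (simp add: xiR_def mult_single)
  finally show ?case .
qed

lemma phiZb_E: "phi (Zb j) * EE = sc (Poly_Mapping.single (0, j) 1) * EE"
proof (induction j rule: int_induct[where k=0])
  case base then show ?case by (simp add: single00)
next
  case (step1 j)
  have "phi (Zb (j + 1)) * EE = phi (Zb j) * (phi M2T * EE)"
    by (simp add: zp_succ[OF M2T_inv] phi_mult mult.assoc)
  also have "\<dots> = sc yR * (phi (Zb j) * EE)" by (simp only: EE_b sc_move)
  also have "\<dots> = sc (Poly_Mapping.single (0, j + 1) 1) * EE"
    by (simp only: step1 mult.assoc[symmetric] sc_mult[symmetric]) (simp add: yR_def mult_single add.commute)
  finally show ?case .
next
  case (step2 j)
  have "phi (Zb (j - 1)) * EE = phi (Zb j) * (phi M2Ti * EE)"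
    by (simp add: zp_pred[OF M2T_inv] phi_mult mult.assoc)
  also have "\<dots> = sc yiR * (phi (Zb j) * EE)" by (simp only: EE_bi sc_move)
  also have "\<dots> = sc (Poly_Mapping.single (0, j - 1) 1) * EE"
    by (simp only: step2 mult.assoc[symmetric] sc_mult[symmetric]) (simp add: yiR_def mult_single)
  finally show ?case .
qed

lemma E_phiZa: "EE * phi (Za i) = EE"
proof (induction i rule: int_induct[where k=0])
  case base then show ?case by simp
next
  case (step1 i) then show ?case by (simp add: zp_succ[OF M1_inv] phi_mult mult.assoc[symmetric] EE_a2)
next
  case (step2 i) then show ?case by (simp add: zp_pred[OF M1_inv] phi_mult mult.assoc[symmetric] EE_ai2)
qed

lemma E_phiZb: "EE * phi (Zb i) = EE"
proof (induction i rule: int_induct[where k=0])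
  case base then show ?case by simp
next
  case (step1 i) then show ?case by (simp add: zp_succ[OF M2T_inv] phi_mult mult.assoc[symmetric] EE_b2)
next
  case (step2 i) then show ?case by (simp add: zp_pred[OF M2T_inv] phi_mult mult.assoc[symmetric] EE_bi2)
qed

definition sgm :: "int \<times> int \<Rightarrow> bool \<Rightarrow> R" where
  "sgm k s = (if s then Poly_Mapping.single k 1 else - Poly_Mapping.single k 1)"

lemma phi_Cm: "phi (Cm s) = 1 - sc (if s then 1 else -1) * EE"
  by (cases s) (simp_all add: Cm_def phi_comm phi_comm' sc_uminus)

lemma phi_ck: "phi (ck (i, j) s) = 1 - sc (sgm (i, j) s) * EE"
proof -
  define P where "P = phi (Zb j) * phi (Za i)"
  define P' where "P' = phi (Za (- i)) * phi (Zb (- j))"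
  define e where "e = (if s then 1 else -1 :: R)"
  have PP: "P * P' = 1"
    unfolding P_def P'_def by (simp add: phi_mult[symmetric] mult.assoc)
  have EP: "EE * P' = EE" unfolding P'_def by (simp add: mult.assoc[symmetric] E_phiZa E_phiZb)
  have PE: "P * EE = sc (Poly_Mapping.single (i, j) 1) * EE"
  proof -
    have "P * EE = phi (Zb j) * (sc (Poly_Mapping.single (i, 0) 1) * EE)"
      by (simp add: P_def mult.assoc phiZa_E)
    also have "\<dots> = sc (Poly_Mapping.single (i, 0) 1) * (sc (Poly_Mapping.single (0, j) 1) * EE)"
      by (simp only: sc_move[of "phi (Zb j)" "Poly_Mapping.single (i, 0) 1" EE] phiZb_E)
    also have "\<dots> = sc (Poly_Mapping.single (i, j) 1) * EE"
      by (simp only: mult.assoc[symmetric] sc_mult[symmetric]) (simp add: mult_single)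
    finally show ?thesis .
  qed
  have "phi (ck (i, j) s) = P * (1 - sc e * EE) * P'"
    by (simp add: ck_def phi_mult phi_Cm P_def P'_def e_def mult.assoc)
  also have "\<dots> = P * P' - P * (sc e * EE) * P'"
    by (simp add: algebra_simps)
  also have "\<dots> = P * P' - sc e * ((P * EE) * P')"
    by (simp only: sc_move[of P e EE] mult.assoc)
  also have "\<dots> = 1 - sc e * (sc (Poly_Mapping.single (i, j) 1) * EE)"
    by (simp only: PP PE mult.assoc EP)
  also have "\<dots> = 1 - sc (sgm (i, j) s) * EE"
    by (simp only: mult.assoc[symmetric] sc_mult[symmetric]) (simp add: e_def sgm_def)
  finally show ?thesis .
qed

definition polyL :: "((int \<times> int) \<times> bool) list \<Rightarrow> R" where
  "polyL L = sum_list (map (\<lambda>(k, s). sgm k s) L)"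

lemma polyL_Nil [simp]: "polyL [] = 0" by (simp add: polyL_def)
lemma polyL_Cons [simp]: "polyL ((k, s) # L) = sgm k s + polyL L" by (simp add: polyL_def)
lemma polyL_append: "polyL (L1 @ L2) = polyL L1 + polyL L2" by (simp add: polyL_def)

lemma phi_PL: "phi (PL L) = 1 - sc (polyL L) * EE"
proof (induction L)
  case Nil then show ?case by simp
next
  case (Cons x L)
  obtain i j s where x: "x = ((i, j), s)" by (metis prod.exhaust)
  define a where "a = sgm (i, j) s"
  define b where "b = polyL L"
  have z: "(sc a * EE) * (sc b * EE) = 0"
    by (simp only: mult.assoc sc_move[of EE b EE] EE_sq) simp
  have "phi (PL (x # L)) = (1 - sc a * EE) * (1 - sc b * EE)"
    by (simp add: x phi_mult phi_ck Cons a_def b_def)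
  also have "\<dots> = 1 - (sc a * EE + sc b * EE) + (sc a * EE) * (sc b * EE)"
    by (simp add: algebra_simps)
  also have "\<dots> = 1 - sc (polyL (x # L)) * EE"
  proof -
    have "polyL (x # L) = a + b" by (simp add: x a_def b_def)
    then show ?thesis by (simp add: z sc_add distrib_right)
  qed
  finally show ?case .
qed

lemma det_phi_hom: "det2 (phi (u * v)) = det2 (phi u) * det2 (phi v)" "det2 (phi 1) = 1"
  by (simp_all add: phi_mult det2_mult)

lemma zp_xR: "zp xR xiR m = Poly_Mapping.single (m, 0) 1"
proof (induction m rule: int_induct[where k=0])
  case base then show ?case by (simp add: zp_def single00)
next
  case (step1 i) then show ?case by (simp only: zp_succ[OF x_inv xi_inv]) (simp add: xR_def mult_single)
next
  case (step2 i) then show ?case by (simp only: zp_pred[OF x_inv xi_inv]) (simp add: xiR_def mult_single)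
qed

lemma zp_yR: "zp yR yiR m = Poly_Mapping.single (0, m) 1"
proof (induction m rule: int_induct[where k=0])
  case base then show ?case by (simp add: zp_def single00)
next
  case (step1 i) then show ?case by (simp only: zp_succ[OF y_inv yi_inv]) (simp add: yR_def mult_single)
next
  case (step2 i) then show ?case by (simp only: zp_pred[OF y_inv yi_inv]) (simp add: yiR_def mult_single)
qed

lemma det_Za: "det2 (phi (Za m)) = Poly_Mapping.single (m, 0) 1"
proof -
  have "det2 (phi (Za m)) = zp (det2 (phi M1)) (det2 (phi M1i)) m"
    by (rule zp_hom[where h = "\<lambda>u. det2 (phi u)"]) (simp_all add: det_phi_hom)
  also have "\<dots> = zp xR xiR m" by (simp add: phi_M1 phi_M1i det2_def)
  finally show ?thesis by (simp add: zp_xR)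
qed

lemma det_Zb: "det2 (phi (Zb m)) = Poly_Mapping.single (0, m) 1"
proof -
  have "det2 (phi (Zb m)) = zp (det2 (phi M2T)) (det2 (phi M2Ti)) m"
    by (rule zp_hom[where h = "\<lambda>u. det2 (phi u)"]) (simp_all add: det_phi_hom)
  also have "\<dots> = zp yR yiR m" by (simp add: phi_M2T phi_M2Ti det2_def)
  finally show ?thesis by (simp add: zp_yR)
qed

lemma det_scE: "det2 (1 - sc t * EE) = 1"
  unfolding EE_def sc_def one_mat2_def det2_def
  by (simp only: times_mat2.simps minus_mat2.simps mat2.case) algebra

lemma det_PL: "det2 (phi (PL L)) = 1"
  by (simp add: phi_PL det_scE)

section \<open>Cancellation\<close>

lemma lookup_sgm: "Poly_Mapping.lookup (sgm k s) k' = (if k = k' then (if s then 1 else -1) else 0)"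
  by (simp add: sgm_def lookup_single when_def)

lemma poly_count:
  "(k, \<not> s) \<notin> set L \<Longrightarrow>
   Poly_Mapping.lookup (polyL L) k = (if s then 1 else -1) * int (length (filter (\<lambda>x. fst x = k) L))"
proof (induction L)
  case Nil then show ?case by simp
next
  case (Cons x L)
  obtain k' s' where x: "x = (k', s')" by (cases x)
  show ?case
  proof (cases "k' = k")
    case True
    then have "s' = s" using Cons.prems x by (cases s; cases s') auto
    then show ?thesis using Cons True x by (simp add: lookup_add lookup_sgm algebra_simps)
  next
    case False
    then show ?thesis using Cons x by (simp add: lookup_add lookup_sgm)
  qed
qed

lemma sgm_cancel: "sgm k s + sgm k (\<not> s) = 0"
  by (cases s) (simp_all add: sgm_def)

lemma cancel_NN: "polyL L = 0 \<Longrightarrow> PL L \<in> NN"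
proof (induction "length L" arbitrary: L rule: less_induct)
  case less
  show ?case
  proof (cases L)
    case Nil then show ?thesis by (simp add: SG_one[OF NN_SG])
  next
    case (Cons x L')
    obtain k s where x: "x = (k, s)" by (cases x)
    have mem: "(k, \<not> s) \<in> set L'"
    proof (rule ccontr)
      assume nm: "(k, \<not> s) \<notin> set L'"
      have "Poly_Mapping.lookup (polyL L) k = 0" using less.prems by simp
      moreover have "Poly_Mapping.lookup (polyL L) k
          = (if s then 1 else -1) * (1 + int (length (filter (\<lambda>x. fst x = k) L')))"
        using poly_count[OF nm] Cons x by (simp add: lookup_add lookup_sgm algebra_simps)
      ultimately show False by (cases s) simp_all
    qed
    then obtain L1 L2 where L': "L' = L1 @ (k, \<not> s) # L2" by (meson split_list)
    have "polyL L = (sgm k s + sgm k (\<not> s)) + polyL (L1 @ L2)"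
      using Cons x L' by (simp add: polyL_append algebra_simps)
    then have p0: "polyL (L1 @ L2) = 0" using less.prems sgm_cancel by simp
    have "PL (L1 @ L2) \<in> NN" by (rule less.hyps[OF _ p0]) (simp add: Cons L')
    moreover have "eqv (ck k s * PL L1 * ck k (\<not> s) * PL L2) (PL L1 * PL L2)"
      by (intro eqv_mult eqv_conjF1 eqv_refl ck_F1 PL_F1 ck_inv ck_inv' PL_FF)
    moreover have "PL L = ck k s * PL L1 * ck k (\<not> s) * PL L2"
      using Cons x L' by (simp add: PL_append mult.assoc)
    ultimately show ?thesis by (simp add: PL_append eqv_NN)
  qed
qed

lemma phi_scE_zero:
  assumes "1 - sc t * EE = 1" shows "t = 0"
proof -
  have "sc t * EE = 0" using assms by simp
  then have "t * (be * be) = 0" unfolding sc_def EE_def zero_mat2_def by simp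
  then show ?thesis using be_nz by simp
qed

lemma part_i_rev:
  assumes "g \<in> FF" "phi g = 1" shows "g \<in> NN"
proof -
  obtain m n L where e: "eqv g (Za m * Zb n * PL L)" using NF[OF assms(1)] by blast
  then obtain \<nu> where nu: "\<nu> \<in> NN" "g = \<nu> * (Za m * Zb n * PL L)" by (auto simp: eqv_def)
  have pQ: "phi (Za m * Zb n * PL L) = 1" using assms(2) nu phi_NN by (simp add: phi_mult)
  then have "det2 (phi (Za m * Zb n * PL L)) = 1" by simp
  then have "Poly_Mapping.single (m, 0) 1 * Poly_Mapping.single (0, n) 1 = (1 :: R)"
    by (simp add: phi_mult det2_mult det_Za det_Zb det_PL)
  then have "Poly_Mapping.single (m, n) (1::int) = Poly_Mapping.single (0, 0) 1"
    by (simp add: mult_single single00)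
  then have "Poly_Mapping.lookup (Poly_Mapping.single (m, n) (1::int)) (m, n) = Poly_Mapping.lookup (Poly_Mapping.single (0, 0) (1::int)) (m, n)"
    by simp
  then have mn: "m = 0" "n = 0" by (auto simp: lookup_single when_def split: if_splits)
  have "phi (PL L) = 1" using pQ mn by simp
  then have "polyL L = 0" by (simp add: phi_PL phi_scE_zero)
  then have "PL L \<in> NN" by (rule cancel_NN)
  then show ?thesis using nu mn SG_mult[OF NN_SG] by simp
qed

lemma part_i: "g \<in> FF \<Longrightarrow> g \<in> derived_series 2 FF \<longleftrightarrow> coeff_mat g 0 = 1"
  using part_i_rev phi_NN by (auto simp: derived2 phi_coeff)



lemma ip_zero: "0 \<in> ideal_pow I n"
  by (cases n) (simp_all add: ideal_pow_step.zero)

lemma ip_add: "u \<in> ideal_pow I n \<Longrightarrow> v \<in> ideal_pow I n \<Longrightarrow> u + v \<in> ideal_pow I n"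
  by (cases n) (simp_all add: ideal_pow_step.add)

lemma ip_mult_left:
  assumes I: "\<And>r a. a \<in> I \<Longrightarrow> r * a \<in> I"
  shows "u \<in> ideal_pow I n \<Longrightarrow> r * u \<in> ideal_pow I n"
proof (cases n)
  case 0 then show "r * u \<in> ideal_pow I n" by simp
next
  case (Suc m)
  assume "u \<in> ideal_pow I n"
  then have "u \<in> ideal_pow_step I (ideal_pow I m)" using Suc by simp
  then have "r * u \<in> ideal_pow_step I (ideal_pow I m)"
  proof induction
    case zero then show ?case by (simp add: ideal_pow_step.zero)
  next
    case (prod a b)
    have e: "r * (a * b) = (r * a) * b" by (simp add: mult.assoc)
    show ?case unfolding e by (rule ideal_pow_step.prod[OF I[OF prod(1)] prod(2)])
  next
    case (add u v) then show ?case by (simp add: distrib_left ideal_pow_step.add)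
  qed
  then show ?thesis using Suc by simp
qed

lemma ip_sum:
  "(\<And>a. a \<in> A \<Longrightarrow> f a \<in> ideal_pow I n) \<Longrightarrow> sum f A \<in> ideal_pow I n"
  by (induction A rule: infinite_finite_induct) (auto intro: ip_zero ip_add)

lemma ip_mult:
  assumes I: "\<And>r a. a \<in> I \<Longrightarrow> r * a \<in> I"
  shows "u \<in> ideal_pow I a \<Longrightarrow> w \<in> ideal_pow I b \<Longrightarrow> u * w \<in> ideal_pow I (a + b)"
proof (induction a arbitrary: u)
  case 0 then show ?case using ip_mult_left[OF I] by simp
next
  case (Suc a)
  from Suc.prems(1) have "u \<in> ideal_pow_step I (ideal_pow I a)" by simp
  then have "u * w \<in> ideal_pow_step I (ideal_pow I (a + b))"
  proof induction
    case zero then show ?case by (simp add: ideal_pow_step.zero)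
  next
    case (prod x y)
    have yw: "y * w \<in> ideal_pow I (a + b)" by (rule Suc.IH[OF prod(2) Suc.prems(2)])
    have "x * (y * w) \<in> ideal_pow_step I (ideal_pow I (a + b))"
      by (rule ideal_pow_step.prod[OF prod(1) yw])
    then show ?case by (simp add: mult.assoc)
  next
    case (add u v) then show ?case by (simp add: distrib_right ideal_pow_step.add)
  qed
  then show ?case by simp
qed

lemma Sigma_ideal: "a \<in> Sigma_aug \<Longrightarrow> r * a \<in> Sigma_aug"
  by (simp add: Sigma_aug_def augR_mult)

lemma ipS_mult_left: "u \<in> ideal_pow Sigma_aug n \<Longrightarrow> r * u \<in> ideal_pow Sigma_aug n"
  by (rule ip_mult_left[OF Sigma_ideal])

lemma ipS_mult: "u \<in> ideal_pow Sigma_aug a \<Longrightarrow> w \<in> ideal_pow Sigma_aug b \<Longrightarrow> u * w \<in> ideal_pow Sigma_aug (a + b)"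
  by (rule ip_mult[OF Sigma_ideal])

lemma ipS_neg: "u \<in> ideal_pow Sigma_aug n \<Longrightarrow> - u \<in> ideal_pow Sigma_aug n"
  using ipS_mult_left[of u n "-1"] by simp

lemma Sigma_ip1: "a \<in> Sigma_aug \<Longrightarrow> a \<in> ideal_pow Sigma_aug 1"
  using ideal_pow_step.prod[of a Sigma_aug 1 UNIV] by simp

definition JJ :: "nat \<Rightarrow> R fps set" where
  "JJ d = {f. (\<forall>i<d. fps_nth f i = 0) \<and> (\<forall>i. fps_nth f i \<in> ideal_pow Sigma_aug d)}"

lemma J_zero: "0 \<in> JJ d" by (simp add: JJ_def ip_zero)

lemma J_add: "f \<in> JJ d \<Longrightarrow> g \<in> JJ d \<Longrightarrow> f + g \<in> JJ d"
  by (simp add: JJ_def ip_add)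

lemma J_neg: "f \<in> JJ d \<Longrightarrow> - f \<in> JJ d"
  by (simp add: JJ_def ipS_neg)

lemma J_diff: "f \<in> JJ d \<Longrightarrow> g \<in> JJ d \<Longrightarrow> f - g \<in> JJ d"
proof -
  assume "f \<in> JJ d" "g \<in> JJ d"
  then have "f + - g \<in> JJ d" by (intro J_add J_neg)
  then show ?thesis by simp
qed

lemma J_mult_left: "f \<in> JJ d \<Longrightarrow> h * f \<in> JJ d"
proof -
  assume f: "f \<in> JJ d"
  have "fps_nth (h * f) n = 0" if "n < d" for n
    unfolding fps_mult_nth using f that by (intro sum.neutral) (auto simp: JJ_def)
  moreover have "fps_nth (h * f) n \<in> ideal_pow Sigma_aug d" for n
    unfolding fps_mult_nth using f by (intro ip_sum ipS_mult_left) (auto simp: JJ_def)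
  ultimately show ?thesis by (simp add: JJ_def)
qed

lemma J_mult_right: "f \<in> JJ d \<Longrightarrow> f * h \<in> JJ d"
  using J_mult_left[of f d h] by (simp add: mult.commute)

lemma J_mult2: "f \<in> JJ d \<Longrightarrow> h \<in> JJ d \<Longrightarrow> f * h \<in> JJ (d + d)"
proof -
  assume f: "f \<in> JJ d" and h: "h \<in> JJ d"
  have "fps_nth (f * h) n = 0" if "n < d + d" for n
    unfolding fps_mult_nth
  proof (intro sum.neutral ballI)
    fix i assume "i \<in> {0..n}"
    show "fps_nth f i * fps_nth h (n - i) = 0"
    proof (cases "i < d")
      case True then show ?thesis using f by (simp add: JJ_def)
    next
      case False then have "n - i < d" using that by arith
      then show ?thesis using h by (simp add: JJ_def)
    qed
  qed
  moreover have "fps_nth (f * h) n \<in> ideal_pow Sigma_aug (d + d)" for n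
    unfolding fps_mult_nth using f h by (intro ip_sum ipS_mult) (auto simp: JJ_def)
  ultimately show ?thesis by (simp add: JJ_def)
qed

definition MJ :: "nat \<Rightarrow> R fps mat2 \<Rightarrow> bool" where
  "MJ d M \<longleftrightarrow> mat2_entries M \<subseteq> JJ d"

lemma MJ_M2: "MJ d (M2 a b c e) \<longleftrightarrow> a \<in> JJ d \<and> b \<in> JJ d \<and> c \<in> JJ d \<and> e \<in> JJ d"
  by (simp add: MJ_def)

lemma MJ_zero: "MJ d 0" by (simp add: zero_mat2_def MJ_M2 J_zero)

lemma MJ_add: "MJ d A \<Longrightarrow> MJ d B \<Longrightarrow> MJ d (A + B)"
  by (cases A; cases B) (simp add: MJ_M2 J_add)

lemma MJ_neg: "MJ d A \<Longrightarrow> MJ d (- A)"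
  by (cases A) (simp add: MJ_M2 J_neg)

lemma MJ_diff: "MJ d A \<Longrightarrow> MJ d B \<Longrightarrow> MJ d (A - B)"
  by (cases A; cases B) (simp add: MJ_M2 J_diff)

lemma MJ_mult_left: "MJ d B \<Longrightarrow> MJ d (A * B)"
  by (cases A; cases B) (simp add: MJ_M2 J_add J_mult_left)

lemma MJ_mult_right: "MJ d A \<Longrightarrow> MJ d (A * B)"
  by (cases A; cases B) (simp add: MJ_M2 J_add J_mult_right)

lemma MJ_mult2: "MJ d A \<Longrightarrow> MJ d B \<Longrightarrow> MJ (d + d) (A * B)"
  by (cases A; cases B) (simp add: MJ_M2 J_add J_mult2)

section \<open>Good elements\<close>

definition embm :: "Rt mat2 \<Rightarrow> R fps mat2" where "embm g = mat2_map emb_fps g"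

lemma embm_mult: "embm (A * B) = embm A * embm B"
  unfolding embm_def by (rule mat2_map_mult) (simp_all add: emb_add emb_mult)
lemma embm_one [simp]: "embm 1 = 1"
  unfolding embm_def by (rule mat2_map_one) simp_all

definition Good :: "nat \<Rightarrow> Rt mat2 \<Rightarrow> bool" where
  "Good d g \<longleftrightarrow> MJ d (embm g - 1)"

lemma Good_one: "Good d 1" by (simp add: Good_def MJ_zero)

lemma Good_mult: "Good d g \<Longrightarrow> Good d h \<Longrightarrow> Good d (g * h)"
proof -
  assume a: "Good d g" "Good d h"
  define N1 where "N1 = embm g - 1"
  define N2 where "N2 = embm h - 1"
  have "embm (g * h) - 1 = N1 + N2 + N1 * N2"
    by (simp add: embm_mult N1_def N2_def algebra_simps)
  then show ?thesis using a unfolding Good_def N1_def[symmetric] N2_def[symmetric]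
    by (simp add: MJ_add MJ_mult_left)
qed

lemma Good_inv: "Good d g \<Longrightarrow> g * y = 1 \<Longrightarrow> Good d y"
proof -
  assume a: "Good d g" "g * y = 1"
  have e: "embm g * embm y = 1" using a(2) by (simp add: embm_mult[symmetric])
  have "embm y - 1 = - ((embm g - 1) * embm y)"
    using e by (simp add: algebra_simps)
  then show ?thesis using a(1) unfolding Good_def by (simp add: MJ_neg MJ_mult_right)
qed

lemma Good_comm:
  assumes "Good d a" "Good d b" "a * a' = 1" "b * b' = 1"
  shows "Good (d + d) (a * b * a' * b')"
proof -
  define A where "A = embm a"
  define B where "B = embm b"
  define N1 where "N1 = A - 1"
  define N2 where "N2 = B - 1"
  have aa: "A * embm a' = 1" "B * embm b' = 1" using assms(3,4) by (simp_all add: A_def B_def embm_mult[symmetric])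
  have "embm (a * b * a' * b') - 1 = (A * B - B * A) * (embm a' * embm b')"
  proof -
    have "(A * B - B * A) * (embm a' * embm b') = A * B * embm a' * embm b' - B * (A * embm a') * embm b'"
      by (simp add: algebra_simps)
    also have "\<dots> = A * B * embm a' * embm b' - 1" using aa by (simp add: mult.assoc)
    finally show ?thesis by (simp add: embm_mult A_def B_def)
  qed
  moreover have "A * B - B * A = N1 * N2 - N2 * N1" by (simp add: N1_def N2_def algebra_simps)
  moreover have "MJ d N1" "MJ d N2" using assms(1,2) by (simp_all add: Good_def N1_def N2_def A_def B_def)
  ultimately show ?thesis unfolding Good_def by (simp add: MJ_mult_right MJ_diff MJ_mult2)
qed

lemma derived_Good:
  assumes "\<And>g. g \<in> H \<Longrightarrow> Good d g"
  shows "g \<in> derived H \<Longrightarrow> Good (d + d) g"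
  unfolding derived_def
proof (induction rule: gen_grp.induct)
  case one then show ?case by (rule Good_one)
next
  case (gen x) then show ?case
    by (auto simp: commutators_def intro!: Good_comm assms)
next
  case (inv x y)
  have "Good (d + d) x" using inv by (auto simp: commutators_def intro!: Good_comm assms)
  then show ?case using inv Good_inv by blast
next
  case (mult a b) then show ?case using Good_mult by blast
qed

definition augF :: "R fps \<Rightarrow> int fps" where "augF f = Abs_fps (\<lambda>n. augR (fps_nth f n))"

lemma augF_nth [simp]: "fps_nth (augF f) n = augR (fps_nth f n)" by (simp add: augF_def)

lemma augF_add: "augF (f + g) = augF f + augF g"
  by (rule fps_ext) (simp add: augR_add)
lemma augF_diff: "augF (f - g) = augF f - augF g"
  by (rule fps_ext) (simp add: augR_diff)
lemma augF_mult: "augF (f * g) = augF f * augF g"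
  by (rule fps_ext) (simp add: fps_mult_nth augR_sum augR_mult)
lemma augF_one [simp]: "augF 1 = 1"
  by (rule fps_ext) simp
lemma augF_zero [simp]: "augF 0 = 0"
  by (rule fps_ext) simp
lemma augF_const [simp]: "augF (fps_const r) = fps_const (augR r)"
  by (rule fps_ext) simp
lemma augF_X [simp]: "augF fps_X = fps_X"
  by (rule fps_ext) (simp add: fps_X_def augR_single single00[symmetric])

definition AE :: "Rt mat2 \<Rightarrow> int fps mat2" where "AE g = mat2_map augF (embm g)"

lemma AE_mult: "AE (A * B) = AE A * AE B"
  unfolding AE_def embm_mult by (rule mat2_map_mult) (simp_all add: augF_add augF_mult)
lemma AE_one [simp]: "AE 1 = 1"
  unfolding AE_def embm_one by (simp add: one_mat2_def)

definition ZZ :: "int fps mat2 set" where "ZZ = {M2 u 0 (1 - u) 1 | u. True}"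

lemma ZZ_mult: "A \<in> ZZ \<Longrightarrow> B \<in> ZZ \<Longrightarrow> A * B \<in> ZZ"
proof -
  assume "A \<in> ZZ" "B \<in> ZZ"
  then obtain u w where u: "A = M2 u 0 (1 - u) 1" "B = M2 w 0 (1 - w) 1" by (auto simp: ZZ_def)
  have "A * B = M2 (u * w) 0 (1 - u * w) 1" unfolding u by (simp add: algebra_simps)
  then show ?thesis unfolding ZZ_def by blast
qed

lemma ZZ_comm: "A \<in> ZZ \<Longrightarrow> B \<in> ZZ \<Longrightarrow> A * B = B * A"
  unfolding ZZ_def by (auto simp: algebra_simps)

lemma ZZ_inv: "A \<in> ZZ \<Longrightarrow> A * A' = 1 \<Longrightarrow> A' * A = 1 \<Longrightarrow> A' \<in> ZZ"
proof -
  assume a: "A \<in> ZZ" "A * A' = 1" "A' * A = 1"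
  then obtain u where u: "A = M2 u 0 (1 - u) 1" by (auto simp: ZZ_def)
  obtain p q r s where A': "A' = M2 p q r s" by (cases A')
  from a(3) have h1: "q = 0" "s = 1" by (simp_all add: u A' one_mat2_def)
  from a(2) have h2: "u * p = 1" "(1 - u) * p + r = 0" by (simp_all add: u A' one_mat2_def h1)
  have "r = 1 - p" using h2 by (simp add: algebra_simps)
  then show ?thesis unfolding ZZ_def A' h1 by auto
qed

lemma AE_M1: "AE M1 \<in> ZZ"
proof -
  have "AE M1 = M2 1 0 (1 - 1) 1"
    by (simp add: AE_def embm_def M1_def augR_diff)
  then show ?thesis unfolding ZZ_def by blast
qed

lemma AE_M2T: "AE M2T \<in> ZZ"
proof -
  have "AE M2T = M2 (1 + fps_X) 0 (1 - (1 + fps_X)) 1"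
    by (simp add: AE_def embm_def M2T_def emb_mult emb_diff augF_mult augF_diff augF_add)
  then show ?thesis unfolding ZZ_def by blast
qed

lemma AE_FF: "g \<in> FF \<Longrightarrow> AE g \<in> ZZ"
  unfolding FF_def
proof (induction rule: gen_grp.induct)
  have "(1 :: int fps mat2) = M2 1 0 (1 - 1) 1" by (simp add: one_mat2_def)
  then have "(1 :: int fps mat2) \<in> ZZ" unfolding ZZ_def by blast
  case one then show ?case using \<open>1 \<in> ZZ\<close> by simp
next
  case (gen x) then show ?case using AE_M1 AE_M2T by auto
next
  case (inv x y)
  have "AE x \<in> ZZ" using inv AE_M1 AE_M2T by auto
  then show ?case using ZZ_inv inv by (metis AE_mult AE_one)
next
  case (mult a b) then show ?case by (simp add: AE_mult ZZ_mult)
qed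

lemma comm_trivial:
  fixes A B A' B' :: "'a::monoid_mult"
  assumes "A * B = B * A" "A * A' = 1" "B * B' = 1"
  shows "A * B * A' * B' = 1"
proof -
  have "A * B * A' * B' = B * (A * A') * B'" using assms(1) by (simp add: mult.assoc[symmetric])
  also have "\<dots> = 1" using assms(2,3) by simp
  finally show ?thesis .
qed

lemma AE_comm1: "x \<in> commutators FF \<Longrightarrow> AE x = 1"
proof -
  assume "x \<in> commutators FF"
  then obtain a b a' b' where x: "x = a * b * a' * b'" "a \<in> FF" "b \<in> FF" "a * a' = 1" "a' * a = 1" "b * b' = 1" "b' * b = 1"
    by (auto simp: commutators_def)
  have c: "AE a * AE b = AE b * AE a" using ZZ_comm AE_FF x(2,3) by blast
  show ?thesis unfolding x(1) AE_mult
    by (rule comm_trivial[OF c]) (use x in \<open>simp_all add: AE_mult[symmetric]\<close>)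
qed

lemma AE_F1: "g \<in> F1 \<Longrightarrow> AE g = 1"
  unfolding F1_def derived_def
proof (induction rule: gen_grp.induct)
  case one then show ?case by simp
next
  case (gen x) then show ?case by (rule AE_comm1)
next
  case (inv x y)
  have "AE x = 1" using inv AE_comm1 by blast
  then show ?case using inv by (metis AE_mult mult_1_left AE_one)
next
  case (mult a b) then show ?case by (simp add: AE_mult)
qed

lemma ev1_emb: "fps_nth (emb_fps p) 0 = ev1 p" by (simp add: ev1_def)

lemma NN_Good1: "g \<in> NN \<Longrightarrow> Good 1 g"
proof -
  assume g: "g \<in> NN"
  have phig: "phi g = 1" using phi_NN[OF g] .
  have aeg: "AE g = 1" using AE_F1 g NN_F1 by blast
  obtain p q r s where gs: "g = M2 p q r s" by (cases g)
  have ph: "ev1 p = 1" "ev1 q = 0" "ev1 r = 0" "ev1 s = 1"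
    using phig by (simp_all add: gs phi_def one_mat2_def)
  have ae: "augF (emb_fps p) = 1" "augF (emb_fps q) = 0" "augF (emb_fps r) = 0" "augF (emb_fps s) = 1"
    using aeg by (simp_all add: gs AE_def embm_def one_mat2_def)
  have J1: "f \<in> JJ 1" if "fps_nth f 0 = 0" "augF f = 0" for f
  proof -
    have "augR (fps_nth f i) = 0" for i using that(2) by (metis augF_nth fps_zero_nth)
    then have "fps_nth f i \<in> Sigma_aug" for i by (simp add: Sigma_aug_def)
    then have "fps_nth f i \<in> ideal_pow Sigma_aug 1" for i by (rule Sigma_ip1)
    then show ?thesis using that(1) by (simp add: JJ_def)
  qed
  have "emb_fps p - 1 \<in> JJ 1" by (rule J1) (simp_all add: ph ae ev1_emb augF_diff)
  moreover have "emb_fps s - 1 \<in> JJ 1" by (rule J1) (simp_all add: ph ae ev1_emb augF_diff)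
  moreover have "emb_fps q \<in> JJ 1" by (rule J1) (simp_all add: ph ae ev1_emb)
  moreover have "emb_fps r \<in> JJ 1" by (rule J1) (simp_all add: ph ae ev1_emb)
  ultimately show ?thesis
    by (simp add: Good_def gs embm_def one_mat2_def MJ_M2)
qed

lemma Good_series: "g \<in> derived_series (j + 2) FF \<Longrightarrow> Good (2 ^ j) g"
proof (induction j arbitrary: g)
  case 0 then show ?case using NN_Good1 derived2 by (simp add: numeral_2_eq_2)
next
  case (Suc j)
  have "derived_series (Suc j + 2) FF = derived (derived_series (j + 2) FF)"
    by (simp add: derived_series_Suc[symmetric])
  then have "g \<in> derived (derived_series (j + 2) FF)" using Suc.prems by simp
  then have "Good (2 ^ j + 2 ^ j) g"
    using derived_Good[of "derived_series (j + 2) FF" "2 ^ j" g] Suc.IH by blast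
  moreover have "(2::nat) ^ j + 2 ^ j = 2 ^ Suc j" by simp
  ultimately show ?case by metis
qed

lemma Good_extract:
  assumes "Good d g" "1 \<le> d"
  shows "coeff_mat g 0 = 1
        \<and> (\<forall>i. 1 \<le> i \<and> i < d \<longrightarrow> coeff_mat g i = M2 0 0 0 0)
        \<and> (\<forall>i. d \<le> i \<longrightarrow> mat2_entries (coeff_mat g i) \<subseteq> ideal_pow Sigma_aug d)"
proof -
  obtain p q r s where gs: "g = M2 p q r s" by (cases g)
  define fp where "fp = emb_fps p - 1"
  define fs where "fs = emb_fps s - 1"
  have ep: "emb_fps p = fp + 1" and es: "emb_fps s = fs + 1" by (simp_all add: fp_def fs_def)
  have J: "fp \<in> JJ d" "fs \<in> JJ d" "emb_fps q \<in> JJ d" "emb_fps r \<in> JJ d"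
    using assms(1) by (simp_all add: Good_def gs embm_def one_mat2_def MJ_M2 fp_def fs_def)
  have z: "fps_nth f i = 0" if "f \<in> JJ d" "i < d" for f i using that by (simp add: JJ_def)
  have m: "fps_nth f i \<in> ideal_pow Sigma_aug d" if "f \<in> JJ d" for f i using that by (simp add: JJ_def)
  have c0: "coeff_mat g 0 = 1"
    using z[OF J(1), of 0] z[OF J(2), of 0] z[OF J(3), of 0] z[OF J(4), of 0] assms(2)
    by (simp add: coeff_mat_def gs one_mat2_def ep es)
  have c1: "coeff_mat g i = M2 0 0 0 0" if "1 \<le> i" "i < d" for i
    using z[OF J(1) that(2)] z[OF J(2) that(2)] z[OF J(3) that(2)] z[OF J(4) that(2)] that(1)
    by (simp add: coeff_mat_def gs ep es)
  have c2: "mat2_entries (coeff_mat g i) \<subseteq> ideal_pow Sigma_aug d" if "d \<le> i" for i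
    using m[OF J(1), of i] m[OF J(2), of i] m[OF J(3), of i] m[OF J(4), of i] that assms(2)
    by (simp add: coeff_mat_def gs ep es)
  show ?thesis using c0 c1 c2 by blast
qed

theorem lemma6:
  shows "(\<forall>g \<in> FF. g \<in> derived_series 2 FF \<longleftrightarrow> coeff_mat g 0 = 1)
    \<and> (\<forall>k d g. k > 1 \<longrightarrow> d = 2 ^ (k - 2) \<longrightarrow> g \<in> derived_series k FF \<longrightarrow>
          coeff_mat g 0 = 1
        \<and> (\<forall>i. 1 \<le> i \<and> i < d \<longrightarrow> coeff_mat g i = M2 0 0 0 0)
        \<and> (\<forall>i. d \<le> i \<longrightarrow> mat2_entries (coeff_mat g i) \<subseteq> ideal_pow Sigma_aug d))"
proof (intro conjI allI ballI impI)
  fix g assume "g \<in> FF"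
  then show "g \<in> derived_series 2 FF \<longleftrightarrow> coeff_mat g 0 = 1" by (rule part_i)
next
  fix k d :: nat and g
  assume k: "1 < k" and d: "d = 2 ^ (k - 2)" and g: "g \<in> derived_series k FF"
  have kk: "k = (k - 2) + 2" using k by simp
  have "Good (2 ^ (k - 2)) g" using g kk Good_series by metis
  moreover have "1 \<le> (2::nat) ^ (k - 2)" by simp
  ultimately have "coeff_mat g 0 = 1
        \<and> (\<forall>i. 1 \<le> i \<and> i < d \<longrightarrow> coeff_mat g i = M2 0 0 0 0)
        \<and> (\<forall>i. d \<le> i \<longrightarrow> mat2_entries (coeff_mat g i) \<subseteq> ideal_pow Sigma_aug d)"
    unfolding d by (rule Good_extract)
  then show "coeff_mat g 0 = 1" "\<And>i. 1 \<le> i \<and> i < d \<Longrightarrow> coeff_mat g i = M2 0 0 0 0"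
    "\<And>i. d \<le> i \<Longrightarrow> mat2_entries (coeff_mat g i) \<subseteq> ideal_pow Sigma_aug d" by blast+
qed


end
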